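(* Let $H=L^2(\lambda_{(0,1)};\mathbb R)$ with inner product $\langle\cdot,\cdot\rangle_H$ and norm $\|\cdot\|_H$; let $\beta\in(\tfrac18,\tfrac12)$, $T,\eta\in(0,\infty)$, $\kappa\in\mathbb R$, $\varrho\in(\tfrac1{16},\tfrac\beta2)$, $\chi\in(0,\tfrac\varrho2-\tfrac1{32}]$; let $e_0\equiv1$, $e_n(x)=\sqrt2\cos(2n\pi x)$, $e_{-n}(x)=\sqrt2\sin(2n\pi x)$ ($n\in\mathbb N$); let $\lambda_k=16k^4\pi^4-4k^2\pi^2+\eta$ ($k\in\mathbb Z$); let $(b_k),(\tilde b_k)\subseteq\mathbb R$ with $\sum_{m\in\mathbb Z}(|b_m|^2+|\tilde b_m|^2)|m|^{4\beta-4}<\infty$; let $A$ be given by $D(A)=\{v\in H\colon\sum_k|\lambda_k\langle e_k,v\rangle_H|^2<\infty\}$, $Av=\sum_k-\lambda_k\langle e_k,v\rangle_He_k$, with interpolation spaces $(H_r)_{r\in\mathbb R}$ associated to $-A$; let $\xi\in H_{1/4}$; let $(\Omega,\mathcal F,\mathbb P)$ be a probability space with normal filtration $(\mathcal F_t)_{t\in[0,T]}$ and $\mathrm{Id}_H$-cylindrical Wiener process $(W_t)_{t\in[0,T]}$; let $F\colon H_{1/16}\to H_{-1/4}$, $F(v)=\eta v-\tfrac\kappa2(v^2)'$; let $B\colon H\to H_{-1}$, $Bv=\sum_k(b_k\langle e_k,v\rangle_H+\tilde b_k\langle e_{-k},v\rangle_H)e_k$; let $(h_n)\subseteq(0,\infty)$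 with $\limsup h_n=0$; let $P_nv=\sum_{k=-n}^n\langle e_k,v\rangle_He_k$; and let $\mathcal X^n,\mathcal O^n\colon[0,T]\times\Omega\to P_n(H)$ be stochastic processes with $\mathcal O^n_t=\int_0^tP_ne^{(t-s)A}B\,dW_s$ $\mathbb P$-a.s. and $\mathbb P\big(\mathcal X^n_t=P_ne^{tA}\xi+\int_0^tP_ne^{(t-s)A}\mathbb 1_{\{\|\mathcal X^n_{\lfloor s\rfloor_{h_n}}\|_{H_\varrho}+\|\mathcal O^n_{\lfloor s\rfloor_{h_n}}+P_ne^{\lfloor s\rfloor_{h_n}A}\xi\|_{H_\varrho}\le|h_n|^{-\chi}\}}F(\mathcal X^n_{\lfloor s\rfloor_{h_n}})\,ds+\mathcal O^n_t\big)=1$ for all $n,t$. Let $p\in[2,\infty)$, $n\in\mathbb N$, $\varepsilon\in[0,\tfrac\beta2-\varrho)$, and let $O\colon[0,T]\times\Omega\to H_\varrho$ be a stochastic process such that for all $t\in[0,T]$ it holds $\mathbb P$-a.s. that $O_t=\int_0^te^{(t-s)A}B\,dW_s$. Then $$\sup_{t\in[0,T]}\|O_t-\mathcal O^n_t\|_{\mathcal L^p(\mathbb P;H_\varrho)}\le\Big[\frac{p(p-1)T^{\beta-2\varrho-2\varepsilon}}{2(\beta-2\varrho-2\varepsilon)}\Big]^{1/2}\|B\|_{HS(H,H_{(\beta-1)/2})}\,n^{-4\varepsilon}.$$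
   Context: $\lambda_{(0,1)}$ is Lebesgue measure on $(0,1)$. $(-A)^rv=\sum_k\lambda_k^r\langle e_k,v\rangle_He_k$; for $r\ge0$, $H_r=\{v\in H\colon\sum_k\lambda_k^{2r}|\langle e_k,v\rangle_H|^2<\infty\}$ with $\|v\|_{H_r}=\|(-A)^rv\|_H$; for $r<0$, $H_r$ is the completion of $H$ under $\|(-A)^r\cdot\|_H$. $e^{tA}v=\sum_ke^{-\lambda_kt}\langle e_k,v\rangle_He_k$. $HS(H,H_r)$ denotes the space of Hilbert–Schmidt operators from $H$ to $H_r$ with its norm. $\|Z\|_{\mathcal L^p(\mathbb P;H_\varrho)}=(\mathbb E\|Z\|_{H_\varrho}^p)^{1/p}$. $\lfloor t\rfloor_h=\max((-\infty,t]\cap\{0,h,-h,2h,-2h,\dots\})$. *)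

theory Defs
  imports "HOL-Probability.Probability"
begin

text \<open>Elements of H are represented by real functions on the reals, regarded on (0,1).\<close>

definition ebasis :: "int \<Rightarrow> real \<Rightarrow> real" where
  "ebasis k x = (if k = 0 then 1
     else if k > 0 then sqrt 2 * cos (2 * real_of_int k * pi * x)
     else sqrt 2 * sin (2 * real_of_int (- k) * pi * x))"

definition inH :: "(real \<Rightarrow> real) \<Rightarrow> bool" where
  "inH v \<longleftrightarrow> set_borel_measurable lborel {0<..<1} v \<and>
              set_integrable lborel {0<..<1} (\<lambda>x. (v x)\<^sup>2)"

definition coef :: "int \<Rightarrow> (real \<Rightarrow> real) \<Rightarrow> real" where
  "coef k v = (LINT x:{0<..<1}|lborel. ebasis k x * v x)"

definition lam :: "real \<Rightarrow> int \<Rightarrow> real" where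
  "lam \<eta> k = 16 * (real_of_int k)^4 * pi^4 - 4 * (real_of_int k)^2 * pi^2 + \<eta>"

definition inHr :: "real \<Rightarrow> real \<Rightarrow> (real \<Rightarrow> real) \<Rightarrow> bool" where
  "inHr \<eta> r v \<longleftrightarrow> inH v \<and> (\<lambda>k. lam \<eta> k powr (2*r) * (coef k v)\<^sup>2) summable_on UNIV"

definition Hr_norm :: "real \<Rightarrow> real \<Rightarrow> (real \<Rightarrow> real) \<Rightarrow> real" where
  "Hr_norm \<eta> r v = sqrt (\<Sum>\<^sub>\<infinity>k. lam \<eta> k powr (2*r) * (coef k v)\<^sup>2)"

definition inPnH :: "nat \<Rightarrow> (real \<Rightarrow> real) \<Rightarrow> bool" where
  "inPnH n v \<longleftrightarrow> inH v \<and> (\<forall>k. \<bar>k\<bar> > int n \<longrightarrow> coef k v = 0)"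

definition Pn_semigroup :: "real \<Rightarrow> nat \<Rightarrow> real \<Rightarrow> (real \<Rightarrow> real) \<Rightarrow> real \<Rightarrow> real" where
  "Pn_semigroup \<eta> n t v x = (\<Sum>k\<in>{- int n..int n}. exp (- lam \<eta> k * t) * coef k v * ebasis k x)"

text \<open>Matrix coefficients \<open>\<langle>e_k, B e_j\<rangle>_H\<close> of B.\<close>
definition Bmat :: "(int \<Rightarrow> real) \<Rightarrow> (int \<Rightarrow> real) \<Rightarrow> int \<Rightarrow> int \<Rightarrow> real" where
  "Bmat b bt k j = (if j = k then b k else 0) + (if j = - k then bt k else 0)"

definition HS_norm_B :: "real \<Rightarrow> real \<Rightarrow> (int \<Rightarrow> real) \<Rightarrow> (int \<Rightarrow> real) \<Rightarrow> real" where
  "HS_norm_B \<eta> r b bt =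
     sqrt (\<Sum>\<^sub>\<infinity>j. (\<Sum>\<^sub>\<infinity>k. lam \<eta> k powr (2*r) * (Bmat b bt k j)\<^sup>2))"

text \<open>Coefficient \<open>\<langle>e_k, F(v)\<rangle>\<close> of \<open>F(v) = \<eta> v - (\<kappa>/2)(v^2)'\<close>, the derivative
  taken in the (periodic) distributional sense:
  \<open>\<langle>e_k,(v^2)'\<rangle> = - \<integral> e_k' v^2\<close>.\<close>
definition F_coef :: "real \<Rightarrow> real \<Rightarrow> int \<Rightarrow> (real \<Rightarrow> real) \<Rightarrow> real" where
  "F_coef \<eta> \<kappa> k v = \<eta> * coef k v
      - (\<kappa> / 2) * (- (LINT x:{0<..<1}|lborel. deriv (ebasis k) x * (v x)\<^sup>2))"

definition grid_floor :: "real \<Rightarrow> real \<Rightarrow> real" where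
  "grid_floor h t = Sup {s. s \<le> t \<and> (\<exists>z::int. s = real_of_int z * h)}"

definition normal_filtration :: "'a measure \<Rightarrow> real \<Rightarrow> (real \<Rightarrow> 'a set set) \<Rightarrow> bool" where
  "normal_filtration M T F \<longleftrightarrow>
     (\<forall>t\<in>{0..T}. sigma_algebra (space M) (F t) \<and> F t \<subseteq> sets M \<and> null_sets M \<subseteq> F t) \<and>
     (\<forall>s\<in>{0..T}. \<forall>t\<in>{0..T}. s \<le> t \<longrightarrow> F s \<subseteq> F t) \<and>
     (\<forall>t\<in>{0..<T}. F t = (\<Inter>u\<in>{t<..T}. F u))"

text \<open>An \<open>Id_H\<close>-cylindrical \<open>(F_t)\<close>-Wiener process on [0,T], represented through its
  coordinates \<open>\<beta>_j(t) = \<langle>e_j, W_t\<rangle>\<close> with respect to the ONB \<open>(e_j)_{j\<in>\<int>}\<close>: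
  a family of independent standard \<open>(F_t)\<close>-Brownian motions.\<close>
definition cyl_wiener :: "'a measure \<Rightarrow> real \<Rightarrow> (real \<Rightarrow> 'a set set)
    \<Rightarrow> (int \<Rightarrow> real \<Rightarrow> 'a \<Rightarrow> real) \<Rightarrow> bool" where
  "cyl_wiener M T F \<beta> \<longleftrightarrow>
     (\<forall>j. \<forall>\<omega>\<in>space M. \<beta> j 0 \<omega> = 0 \<and> continuous_on {0..T} (\<lambda>t. \<beta> j t \<omega>)) \<and>
     (\<forall>j. \<forall>t\<in>{0..T}. \<beta> j t \<in> measurable (measure_of (space M) (F t) (\<lambda>_. 0)) borel) \<and>
     (\<forall>j. \<forall>s\<in>{0..T}. \<forall>t\<in>{0..T}. s < t \<longrightarrow>
         distributed M lborel (\<lambda>\<omega>. \<beta> j t \<omega> - \<beta> j s \<omega>) (normal_density 0 (sqrt (t - s)))) \<and>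
     (\<forall>s\<in>{0..T}. \<forall>t\<in>{0..T}. s < t \<longrightarrow>
         prob_space.indep_sets M
           (\<lambda>i. case i of None \<Rightarrow> F s
                 | Some j \<Rightarrow> {(\<lambda>\<omega>. \<beta> j t \<omega> - \<beta> j s \<omega>) -` A \<inter> space M | A. A \<in> sets borel})
           UNIV)"

text \<open>Riemann sums (left endpoints, uniform partition of [0,t] into N pieces,
  coordinates \<open>|j| \<le> m\<close> of the noise) for the k-th coordinate of
  \<open>\<integral>_0^t \<Phi>(s) dW_s\<close>, where \<open>phi s j = \<langle>e_k, \<Phi>(s) e_j\<rangle>\<close>.\<close>
definition riemann_sum :: "(int \<Rightarrow> real \<Rightarrow> 'a \<Rightarrow> real) \<Rightarrow> (real \<Rightarrow> int \<Rightarrow> real)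
    \<Rightarrow> real \<Rightarrow> nat \<Rightarrow> nat \<Rightarrow> 'a \<Rightarrow> real" where
  "riemann_sum \<beta> phi t N m \<omega> =
     (\<Sum>i<N. \<Sum>j\<in>{- int m..int m}.
        phi (real i * t / real N) j *
          (\<beta> j (real (Suc i) * t / real N) \<omega> - \<beta> j (real i * t / real N) \<omega>))"

text \<open>Z is (a version of) the k-th coordinate of the stochastic integral
  \<open>\<integral>_0^t \<Phi>(s) dW_s\<close> (deterministic integrand): the L^2(P)-limit of the Riemann sums.\<close>
definition is_stoch_int_coord :: "'a measure \<Rightarrow> (int \<Rightarrow> real \<Rightarrow> 'a \<Rightarrow> real)
    \<Rightarrow> (real \<Rightarrow> int \<Rightarrow> real) \<Rightarrow> real \<Rightarrow> ('a \<Rightarrow> real) \<Rightarrow> bool" where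
  "is_stoch_int_coord M \<beta> phi t Z \<longleftrightarrow>
     Z \<in> borel_measurable M \<and>
     (\<forall>N m. integrable M (\<lambda>\<omega>. (Z \<omega> - riemann_sum \<beta> phi t N m \<omega>)\<^sup>2)) \<and>
     ((\<lambda>(N, m). LINT \<omega>|M. (Z \<omega> - riemann_sum \<beta> phi t N m \<omega>)\<^sup>2) \<longlongrightarrow> 0)
        (sequentially \<times>\<^sub>F sequentially)"

definition Lp_norm :: "'a measure \<Rightarrow> real \<Rightarrow> real \<Rightarrow> real \<Rightarrow> ('a \<Rightarrow> real \<Rightarrow> real) \<Rightarrow> ennreal" where
  "Lp_norm M p \<eta> r Z =
     (let I = (\<integral>\<^sup>+ \<omega>. ennreal (Hr_norm \<eta> r (Z \<omega>) powr p) \<partial>M)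
      in if I = \<infinity> then \<infinity> else ennreal (enn2real I powr (1 / p)))"

end

theory Submission
  imports Defs
begin

definition Mm :: "nat \<Rightarrow> real" where "Mm m = fact (2*m) / (2^m * fact m)"

lemma Mm_Suc: "Mm (Suc m) = (2*real m+1) * Mm m"
proof -
  have f1: "fact (2 * Suc m) = (fact (2*m) :: real) * (2*real m+1) * (2*(real m+1))"
    by (simp add: algebra_simps)
  have f2: "fact (Suc m) = (real m + 1) * (fact m :: real)" by simp
  have "Mm (Suc m) = fact (2*m) * (2*real m+1) * (2*(real m+1)) / (2 * 2^m * ((real m + 1) * fact m))"
    unfolding Mm_def f1 f2 by simp
  also have "\<dots> = (2*real m+1) * Mm m"
  proof -
    have "(0::real) < fact m" "(0::real) < 2^m" "(0::real) < real m + 1" by auto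
    then show ?thesis unfolding Mm_def by (simp add: divide_simps)
  qed
  finally show ?thesis .
qed

lemma Mm_bound: "m \<ge> 1 \<Longrightarrow> Mm m \<le> (2*real m - 1)^(m-1)"
proof (induction m rule: nat_induct_at_least)
  case base then show ?case by (simp add: Mm_def)
next
  case (Suc m)
  have "Mm (Suc m) = (2*real m+1) * Mm m" by (rule Mm_Suc)
  also have "\<dots> \<le> (2*real m+1) * (2*real m - 1)^(m-1)"
    using Suc by (intro mult_left_mono) auto
  also have "\<dots> \<le> (2*real m+1) * (2*real m + 1)^(m-1)"
    using Suc by (intro mult_left_mono power_mono) auto
  also have "\<dots> = (2*real (Suc m) - 1)^(Suc m - 1)"
    using Suc by (cases m) (auto simp: algebra_simps)
  finally show ?case .
qed

lemma Mm_ge1: "Mm m \<ge> 1"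
proof (induction m)
  case 0 then show ?case by (simp add: Mm_def)
next
  case (Suc m) then show ?case using Mm_Suc[of m]
    by (smt (verit, best) mult_le_cancel_right1 of_nat_0_le_iff)
qed

lemma Mm_2: "Mm 2 = 3"
  by (simp add: Mm_def fact_numeral)

lemma young_pt:
  fixes y a b :: real and m :: nat
  assumes "y \<ge> 0" "a \<ge> 0" "b \<ge> 0" "a + b = 1" "e = a + real m * b"
  shows "y powr e \<le> a * y + b * y^m"
proof (cases "y = 0")
  case True
  then show ?thesis using assms by simp
next
  case False
  then have yp: "y > 0" using assms by simp
  have "y powr a * (y^m) powr b \<le> a * y + b * y^m"
    using Youngs_inequality_0[of a b y "y^m"] assms yp by simp
  moreover have "y powr a * (y^m) powr b = y powr e"
    using yp assms by (simp add: powr_realpow[symmetric] powr_powr powr_add[symmetric])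
  ultimately show ?thesis by simp
qed

lemma const_bound:
  fixes p :: real
  assumes p: "p \<ge> 2"
  defines "m \<equiv> (if p \<le> 4 then 2 else nat \<lceil>p/2\<rceil>)"
  defines "a \<equiv> (2*real m - p) / (2*real m - 2)"
  defines "b \<equiv> (p - 2) / (2*real m - 2)"
  shows "m \<ge> 2" "a \<ge> 0" "b \<ge> 0" "a + b = 1" "p/2 = a + real m * b"
    "a + b * Mm m \<le> (p*(p-1)/2) powr (p/2)"
proof -
  have cc: "of_int \<lceil>p/2\<rceil> - 1 < p/2" "p/2 \<le> of_int \<lceil>p/2\<rceil>"
    using ceiling_correct[of "p/2"] by (rule conjunct1, rule conjunct2)
  have mfacts: "m \<ge> 2 \<and> 2 * real m \<ge> p \<and> (p > 4 \<longrightarrow> real m < p/2 + 1)"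
  proof (cases "p \<le> 4")
    case True then show ?thesis unfolding m_def by simp
  next
    case False
    then have "\<lceil>p/2\<rceil> \<ge> 2" using cc by linarith
    then have rm: "real m = of_int \<lceil>p/2\<rceil>" unfolding m_def using False by simp
    have "real m \<ge> 2" using rm \<open>\<lceil>p/2\<rceil> \<ge> 2\<close> by simp
    then have "m \<ge> 2" by simp
    moreover have "2 * real m \<ge> p" using rm cc(2) by linarith
    moreover have "real m < p/2 + 1" using rm cc(1) by linarith
    ultimately show ?thesis by blast
  qed
  have m2: "m \<ge> 2" using mfacts by blast
  show "m \<ge> 2" by fact
  have m_ge: "2 * real m \<ge> p" using mfacts by blast
  have den: "2*real m - 2 > 0" using m2 by simp
  show "a \<ge> 0" unfolding a_def using m_ge den by simp
  show "b \<ge> 0" unfolding b_def using p den by simp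
  have "a + b = ((2*real m - p) + (p - 2)) / (2*real m - 2)"
    unfolding a_def b_def by (rule add_divide_distrib[symmetric])
  also have "\<dots> = 1" using den by simp
  finally show ab: "a + b = 1" .
  have num: "(2*real m - p) + real m*(p-2) = p/2 * (2*real m - 2)" by (simp add: algebra_simps)
  have "a + real m * b = ((2*real m - p) + real m*(p-2)) / (2*real m - 2)"
    unfolding a_def b_def by (simp add: add_divide_distrib)
  also have "\<dots> = p/2" unfolding num using den by (intro nonzero_mult_div_cancel_right) simp
  finally show e: "p/2 = a + real m * b" by simp
  have b1: "b \<le> 1" unfolding b_def using den m_ge by simp
  have pp: "p*(p-1) \<ge> 2*1" using p by (intro mult_mono) auto
  have x1: "p*(p-1)/2 \<ge> 1" using pp by simp
  show "a + b * Mm m \<le> (p*(p-1)/2) powr (p/2)"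
  proof (cases "p \<le> 4")
    case True
    then have "m = 2" unfolding m_def by simp
    then have "a + b * Mm m = p - 1" unfolding a_def b_def using Mm_2 by (simp add: field_simps)
    also have "\<dots> \<le> p*(p-1)/2" using mult_nonneg_nonneg[of "p-2" "p-1"] p by (simp add: algebra_simps)
    also have "\<dots> = (p*(p-1)/2) powr 1" using x1 by simp
    also have "\<dots> \<le> (p*(p-1)/2) powr (p/2)" using x1 p by (intro powr_mono) auto
    finally show ?thesis .
  next
    case False
    have mlt: "real m < p/2 + 1" using mfacts False by auto
    have "a + b * Mm m \<le> Mm m"
    proof -
      have "a + b * Mm m = 1 + b * (Mm m - 1)" using ab by (simp add: algebra_simps)
      also have "\<dots> \<le> 1 + 1 * (Mm m - 1)" using b1 Mm_ge1[of m] \<open>b \<ge> 0\<close>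
        by (intro add_left_mono mult_right_mono) auto
      finally show ?thesis by simp
    qed
    also have "\<dots> \<le> (2*real m - 1)^(m-1)" using Mm_bound m2 by simp
    also have "\<dots> \<le> (p*(p-1)/2)^(m-1)"
    proof (intro power_mono)
      have "p*(p-1) \<ge> p * 3" using False by (intro mult_left_mono) auto
      then show "2*real m - 1 \<le> p*(p-1)/2" using mlt False by linarith
    qed (use m2 in auto)
    also have "\<dots> = (p*(p-1)/2) powr (real (m-1))" using x1 by (simp add: powr_realpow)
    also have "\<dots> \<le> (p*(p-1)/2) powr (p/2)" using x1 mlt m2 by (intro powr_mono) auto
    finally show ?thesis .
  qed
qed

lemma const_bound_ex:
  fixes p :: real assumes p: "p \<ge> 2"
  shows "\<exists>m a b. m \<ge> 2 \<and> a \<ge> 0 \<and> b \<ge> 0 \<and> a + b = 1 \<and> p/2 = a + real m * b \<and>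
    a + b * Mm m \<le> (p*(p-1)/2) powr (p/2)"
  using const_bound[OF p] by blast

lemma gauss_moment_bound:
  fixes \<sigma> p :: real
  assumes sp: "\<sigma> > 0" and p: "p \<ge> 2"
  shows "(\<integral>\<^sup>+x. ennreal (normal_density 0 \<sigma> x * \<bar>x\<bar> powr p) \<partial>lborel)
           \<le> ennreal ((p*(p-1)/2) powr (p/2) * \<sigma> powr p)"
proof -
  obtain m a b where m: "m \<ge> 2" and ab: "a \<ge> 0" "b \<ge> 0" "a + b = 1" and e: "p/2 = a + real m * b"
    and cb: "a + b * Mm m \<le> (p*(p-1)/2) powr (p/2)"
    using const_bound_ex[OF p] by blast
  define c1 where "c1 = \<sigma> powr p * a / \<sigma>^2"
  define c2 where "c2 = \<sigma> powr p * b / \<sigma>^(2*m)"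
  have pw: "\<bar>x\<bar> powr p \<le> c1 * x^2 + c2 * x^(2*m)" for x :: real
  proof (cases "x = 0")
    case True
    then show ?thesis using p m by (simp add: power_0_left)
  next
    case False
    define u where "u = \<bar>x/\<sigma>\<bar>"
    have up: "u > 0" using False sp unfolding u_def by simp
    have xu: "\<bar>x\<bar> = \<sigma> * u" using sp unfolding u_def by (simp add: abs_div)
    have "\<bar>x\<bar> powr p = \<sigma> powr p * u powr p" using xu sp up by (simp add: powr_mult)
    have e1: "u powr 2 = u^2" using powr_realpow[OF up, of 2] by simp
    have "u powr p = (u powr 2) powr (p/2)" by (simp add: powr_powr)
    also have "(u powr 2) powr (p/2) = (u^2) powr (p/2)" by (simp only: e1)
    finally have "u powr p = (u^2) powr (p/2)" .
    then have "\<bar>x\<bar> powr p = \<sigma> powr p * (u^2) powr (p/2)" using \<open>\<bar>x\<bar> powr p = \<sigma> powr p * u powr p\<close> by simp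
    moreover have "(u^2) powr (p/2) \<le> a * u^2 + b * (u^2)^m"
      by (rule young_pt) (use ab e in auto)
    ultimately have "\<bar>x\<bar> powr p \<le> \<sigma> powr p * (a * u^2 + b * (u^2)^m)"
      by (metis mult_left_mono powr_ge_zero)
    also have "\<sigma> powr p * (a * u^2 + b * (u^2)^m) = c1 * x^2 + c2 * x^(2*m)"
    proof -
      have "u^2 = x^2 / \<sigma>^2" unfolding u_def by (simp add: power_divide)
      moreover have "(x^2/\<sigma>^2)^m = x^(2*m) / \<sigma>^(2*m)"
        by (simp add: power_divide power_mult)
      ultimately show ?thesis unfolding c1_def c2_def by (simp add: algebra_simps)
    qed
    finally show ?thesis .
  qed
  have h2: "has_bochner_integral lborel (\<lambda>x. normal_density 0 \<sigma> x * x^2) (\<sigma>^2)"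
    using normal_moment_even[where k=1 and \<mu>=0 and \<sigma>=\<sigma>] sp by simp
  have hm0: "has_bochner_integral lborel (\<lambda>x. normal_density 0 \<sigma> x * x^(2*m))
      (fact (2 * m) / ((2 / \<sigma>\<^sup>2)^m * fact m))"
    using normal_moment_even[where k=m and \<mu>=0 and \<sigma>=\<sigma>] sp by simp
  have "fact (2 * m) / ((2 / \<sigma>\<^sup>2)^m * fact m) = Mm m * \<sigma>^(2*m)"
    unfolding Mm_def using sp by (simp add: power_divide power_mult field_simps flip: power_mult power_mult_distrib)
  with hm0 have hm: "has_bochner_integral lborel (\<lambda>x. normal_density 0 \<sigma> x * x^(2*m)) (Mm m * \<sigma>^(2*m))"
    by simp
  have hb: "has_bochner_integral lborel
     (\<lambda>x. c1 * (normal_density 0 \<sigma> x * x^2) + c2 * (normal_density 0 \<sigma> x * x^(2*m)))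
     (c1 * \<sigma>^2 + c2 * (Mm m * \<sigma>^(2*m)))"
    by (intro has_bochner_integral_add has_bochner_integral_mult_right h2 hm)
  have nonneg: "0 \<le> c1 * (normal_density 0 \<sigma> x * x^2) + c2 * (normal_density 0 \<sigma> x * x^(2*m))" for x
  proof -
    have "0 \<le> normal_density 0 \<sigma> x * \<bar>x\<bar> powr p" by simp
    also have "\<dots> \<le> normal_density 0 \<sigma> x * (c1 * x^2 + c2 * x^(2*m))"
      by (intro mult_left_mono pw) simp
    finally show ?thesis by (simp add: algebra_simps)
  qed
  have "(\<integral>\<^sup>+x. ennreal (normal_density 0 \<sigma> x * \<bar>x\<bar> powr p) \<partial>lborel)
      \<le> (\<integral>\<^sup>+x. ennreal (c1 * (normal_density 0 \<sigma> x * x^2) + c2 * (normal_density 0 \<sigma> x * x^(2*m))) \<partial>lborel)"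
  proof (intro nn_integral_mono ennreal_leI)
    fix x :: real
    have "normal_density 0 \<sigma> x * \<bar>x\<bar> powr p \<le> normal_density 0 \<sigma> x * (c1 * x^2 + c2 * x^(2*m))"
      by (intro mult_left_mono pw) simp
    then show "normal_density 0 \<sigma> x * \<bar>x\<bar> powr p \<le> c1 * (normal_density 0 \<sigma> x * x^2) + c2 * (normal_density 0 \<sigma> x * x^(2*m))"
      by (simp add: algebra_simps)
  qed
  also have "\<dots> = ennreal (c1 * \<sigma>^2 + c2 * (Mm m * \<sigma>^(2*m)))"
    using hb nonneg
    by (subst nn_integral_eq_integral) (auto simp: has_bochner_integral_iff)
  also have "c1 * \<sigma>^2 + c2 * (Mm m * \<sigma>^(2*m)) = \<sigma> powr p * (a + b * Mm m)"
    unfolding c1_def c2_def using sp by (simp add: field_simps)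
  finally have I1: "(\<integral>\<^sup>+x. ennreal (normal_density 0 \<sigma> x * \<bar>x\<bar> powr p) \<partial>lborel)
      \<le> ennreal (\<sigma> powr p * (a + b * Mm m))" .
  have "\<sigma> powr p * (a + b * Mm m) \<le> \<sigma> powr p * (p*(p-1)/2) powr (p/2)"
    using cb by (intro mult_left_mono) auto
  then have "\<sigma> powr p * (a + b * Mm m) \<le> (p*(p-1)/2) powr (p/2) * \<sigma> powr p"
    by (simp add: mult.commute)
  then show ?thesis using I1 by (meson ennreal_leI order_trans)
qed

definition FMs :: "'a measure \<Rightarrow> (real \<Rightarrow> 'a set set) \<Rightarrow> real \<Rightarrow> 'a measure" where
  "FMs M F s = measure_of (space M) (F s) (\<lambda>_. 0)"

lemma FMs_facts:
  assumes filt: "normal_filtration M T F" and s: "s \<in> {0..T}"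
  shows "sets (FMs M F s) = F s" "space (FMs M F s) = space M" "F s \<subseteq> sets M"
    "sigma_algebra (space M) (F s)"
proof -
  have sa: "sigma_algebra (space M) (F s)" "F s \<subseteq> sets M"
    using filt s unfolding normal_filtration_def by auto
  show "sets (FMs M F s) = F s" unfolding FMs_def using sigma_algebra.sets_measure_of_eq[OF sa(1)] .
  show "space (FMs M F s) = space M" unfolding FMs_def by (rule space_measure_of_conv)
  show "F s \<subseteq> sets M" by (rule sa(2))
  show "sigma_algebra (space M) (F s)" by (rule sa(1))
qed

lemma FMs_mono:
  assumes filt: "normal_filtration M T F" and s: "s \<in> {0..T}" and t: "t \<in> {0..T}" and st: "s \<le> t"
  shows "F s \<subseteq> F t"
  using filt s t st unfolding normal_filtration_def by auto

lemma W_meas: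
  assumes filt: "normal_filtration M T F" and wiener: "cyl_wiener M T F W"
    and s: "s \<in> {0..T}" and t: "t \<in> {0..T}" and st: "s \<le> t"
  shows "W j s \<in> borel_measurable (FMs M F t)"
proof -
  have m: "W j s \<in> borel_measurable (FMs M F s)"
    using wiener s unfolding cyl_wiener_def FMs_def by auto
  have "subalgebra (FMs M F t) (FMs M F s)"
    unfolding subalgebra_def using FMs_facts[OF filt s] FMs_facts[OF filt t] FMs_mono[OF filt s t st]
    by auto
  then show ?thesis using m by (rule measurable_from_subalg)
qed

lemma incr_meas:
  assumes filt: "normal_filtration M T F" and wiener: "cyl_wiener M T F W"
    and s: "s \<in> {0..T}" and t: "t \<in> {0..T}" and st: "s \<le> t"
  shows "(\<lambda>\<omega>. W j t \<omega> - W j s \<omega>) \<in> borel_measurable (FMs M F t)"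
    "(\<lambda>\<omega>. W j t \<omega> - W j s \<omega>) \<in> borel_measurable M"
    "A \<in> sets borel \<Longrightarrow> (\<lambda>\<omega>. W j t \<omega> - W j s \<omega>) -` A \<inter> space M \<in> F t"
proof -
  show m: "(\<lambda>\<omega>. W j t \<omega> - W j s \<omega>) \<in> borel_measurable (FMs M F t)"
    using W_meas[OF filt wiener s t st] W_meas[OF filt wiener t t order_refl] by measurable
  have "subalgebra M (FMs M F t)"
    unfolding subalgebra_def using FMs_facts[OF filt t] by auto
  then show "(\<lambda>\<omega>. W j t \<omega> - W j s \<omega>) \<in> borel_measurable M" using m by (rule measurable_from_subalg)
  assume "A \<in> sets borel"
  from measurable_sets[OF m this] show "(\<lambda>\<omega>. W j t \<omega> - W j s \<omega>) -` A \<inter> space M \<in> F t"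
    using FMs_facts[OF filt t] by simp
qed

lemma grid_indep_sets:
  assumes P: "prob_space M" and filt: "normal_filtration M T F" and wiener: "cyl_wiener M T F W"
    and t0: "0 \<le> \<tau> 0" and tinc: "\<And>i. \<tau> i < \<tau> (Suc i)" and tN: "\<tau> N \<le> T"
  shows "prob_space.indep_sets M
     (\<lambda>(i,j). {(\<lambda>\<omega>. W j (\<tau> (Suc i)) \<omega> - W j (\<tau> i) \<omega>) -` A \<inter> space M | A. A \<in> sets borel})
     ({..<N} \<times> J)"
proof -
  interpret prob_space M by (rule P)
  define G where "G = (\<lambda>(i,j). {(\<lambda>\<omega>. W j (\<tau> (Suc i)) \<omega> - W j (\<tau> i) \<omega>) -` A \<inter> space M | A. A \<in> sets borel})"
  have mono: "\<tau> i \<le> \<tau> k" if "i \<le> k" for i k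
    using lift_Suc_mono_le[of \<tau> i k] tinc that by (simp add: less_imp_le)
  have inT: "\<tau> i \<in> {0..T}" if "i \<le> N" for i
    using mono[of 0 i] mono[of i N] that t0 tN by auto
  have Gsub: "\<And>i j k. Suc i \<le> k \<Longrightarrow> k \<le> N \<Longrightarrow> G (i,j) \<subseteq> F (\<tau> k)"
  proof
    fix i j k assume that: "Suc i \<le> k" "k \<le> N"
    fix X assume "X \<in> G (i,j)"
    then obtain A where A: "A \<in> sets borel" "X = (\<lambda>\<omega>. W j (\<tau> (Suc i)) \<omega> - W j (\<tau> i) \<omega>) -` A \<inter> space M"
      unfolding G_def by auto
    have "X \<in> F (\<tau> (Suc i))"
      using incr_meas(3)[OF filt wiener inT[of i] inT[of "Suc i"] mono[of i "Suc i"] A(1)] A(2) that by auto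
    then show "X \<in> F (\<tau> k)"
      using FMs_mono[OF filt inT[of "Suc i"] inT[of k] mono[of "Suc i" k]] that by auto
  qed
  have Gspace: "X \<subseteq> space M" if "X \<in> G k" for X k
    using that unfolding G_def by (auto split: prod.splits)
  have Gev: "G (i,j) \<subseteq> events" if "i < N" for i j
    using Gsub[of i N j] FMs_facts(3)[OF filt inT[of N]] that by auto
  have "indep_sets G ({..<n} \<times> J)" if "n \<le> N" for n
    using that
  proof (induction n)
    case 0
    then show ?case by (intro indep_setsI) auto
  next
    case (Suc n)
    have IH: "indep_sets G ({..<n} \<times> J)" using Suc by simp
    show ?case
    proof (intro indep_setsI)
      fix k assume "k \<in> {..<Suc n} \<times> J"
      then show "G k \<subseteq> events" using Gev Suc.prems by (cases k) auto
    next
      fix A K assume Kne: "K \<noteq> {}" and KS: "K \<subseteq> {..<Suc n} \<times> J" and Kfin: "finite K"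
        and AK: "\<forall>k\<in>K. A k \<in> G k"
      define K1 where "K1 = {k\<in>K. fst k < n}"
      define K2 where "K2 = {k\<in>K. fst k = n}"
      define J2 where "J2 = snd ` K2"
      have KU: "K = K1 \<union> K2" "K1 \<inter> K2 = {}" using KS unfolding K1_def K2_def by auto
      have K2eq: "K2 = Pair n ` J2" unfolding J2_def K2_def by force
      have fin: "finite K1" "finite K2" "finite J2" using Kfin unfolding K1_def K2_def J2_def by auto
      have K1S: "K1 \<subseteq> {..<n} \<times> J" using KS unfolding K1_def by auto
      have J2S: "J2 \<subseteq> J" using KS unfolding J2_def K2_def by auto
      have Asp: "A k \<subseteq> space M" if "k \<in> K" for k using AK that Gspace by blast
      show "prob (\<Inter>k\<in>K. A k) = (\<Prod>k\<in>K. prob (A k))"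
      proof (cases "K2 = {}")
        case True
        then have "K = K1" using KU by auto
        then show ?thesis using indep_setsD[OF IH K1S _ fin(1)] Kne AK by auto
      next
        case False
        define B where "B = space M \<inter> (\<Inter>k\<in>K1. A k)"
        have nT: "\<tau> n \<in> {0..T}" "\<tau> (Suc n) \<in> {0..T}" using inT Suc.prems by auto
        have sa: "sigma_algebra (space M) (F (\<tau> n))" using FMs_facts(4)[OF filt nT(1)] .
        have BF: "B \<in> F (\<tau> n)"
        proof (cases "K1 = {}")
          case True
          then show ?thesis unfolding B_def using sa algebra.top[of "space M" "F (\<tau> n)"] by (simp add: sigma_algebra_def)
        next
          case False
          have "(\<Inter>k\<in>K1. A k) \<in> F (\<tau> n)"
          proof (rule semiring_of_sets.finite_INT[OF _ fin(1) False])
            show "semiring_of_sets (space M) (F (\<tau> n))" using sa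
              by (simp add: sigma_algebra_def algebra_def ring_of_sets_def)
            fix k assume "k \<in> K1"
            then show "A k \<in> F (\<tau> n)" using AK Gsub[of "fst k" n "snd k"] Suc.prems
              unfolding K1_def by (cases k) auto
          qed
          moreover have "space M \<inter> (\<Inter>k\<in>K1. A k) = (\<Inter>k\<in>K1. A k)"
            using Asp False unfolding K1_def by blast
          ultimately show ?thesis unfolding B_def by simp
        qed
        have probB: "prob B = (\<Prod>k\<in>K1. prob (A k))"
        proof (cases "K1 = {}")
          case True then show ?thesis unfolding B_def by (simp add: prob_space)
        next
          case False
          have "B = (\<Inter>k\<in>K1. A k)" unfolding B_def using Asp False unfolding K1_def by blast
          then show ?thesis using indep_setsD[OF IH K1S False fin(1)] AK unfolding K1_def by auto
        qed
        have ind: "indep_sets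
           (\<lambda>i. case i of None \<Rightarrow> F (\<tau> n)
                 | Some j \<Rightarrow> {(\<lambda>\<omega>. W j (\<tau> (Suc n)) \<omega> - W j (\<tau> n) \<omega>) -` A \<inter> space M | A. A \<in> sets borel})
           UNIV"
          using wiener nT tinc[of n] unfolding cyl_wiener_def by auto
        define A' where "A' = (\<lambda>i. case i of None \<Rightarrow> B | Some j \<Rightarrow> A (n,j))"
        have "prob (\<Inter>i\<in>insert None (Some ` J2). A' i) = (\<Prod>i\<in>insert None (Some ` J2). prob (A' i))"
        proof (rule indep_setsD[OF ind])
          show "\<forall>i\<in>insert None (Some ` J2).
             A' i \<in> (case i of None \<Rightarrow> F (\<tau> n)
                 | Some j \<Rightarrow> {(\<lambda>\<omega>. W j (\<tau> (Suc n)) \<omega> - W j (\<tau> n) \<omega>) -` A \<inter> space M | A. A \<in> sets borel})"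
          proof
            fix i assume i: "i \<in> insert None (Some ` J2)"
            show "A' i \<in> (case i of None \<Rightarrow> F (\<tau> n)
                 | Some j \<Rightarrow> {(\<lambda>\<omega>. W j (\<tau> (Suc n)) \<omega> - W j (\<tau> n) \<omega>) -` A \<inter> space M | A. A \<in> sets borel})"
            proof (cases i)
              case None then show ?thesis using BF unfolding A'_def by simp
            next
              case (Some j)
              then have "(n,j) \<in> K" using i K2eq unfolding K2_def by auto
              then have "A (n,j) \<in> G (n,j)" using AK by auto
              then show ?thesis using Some unfolding A'_def G_def by simp
            qed
          qed
        qed (use fin in auto)
        moreover have "(\<Inter>i\<in>insert None (Some ` J2). A' i) = (\<Inter>k\<in>K. A k)"
        proof -
          have "(\<Inter>i\<in>insert None (Some ` J2). A' i) = B \<inter> (\<Inter>j\<in>J2. A (n,j))"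
            unfolding A'_def by auto
          also have "\<dots> = (\<Inter>k\<in>K. A k)"
          proof (intro equalityI subsetI)
            fix x assume x: "x \<in> B \<inter> (\<Inter>j\<in>J2. A (n,j))"
            show "x \<in> (\<Inter>k\<in>K. A k)"
            proof
              fix k assume k: "k \<in> K"
              show "x \<in> A k"
              proof (cases "k \<in> K1")
                case True then show ?thesis using x unfolding B_def by blast
              next
                case False
                then have "k \<in> K2" using k KU(1) by blast
                then obtain j where "j \<in> J2" "k = (n,j)" using K2eq by blast
                then show ?thesis using x by blast
              qed
            qed
          next
            fix x assume x: "x \<in> (\<Inter>k\<in>K. A k)"
            obtain k0 where "k0 \<in> K" using Kne by blast
            then have "x \<in> space M" using x Asp by blast
            moreover have "x \<in> (\<Inter>k\<in>K1. A k)" using x KU(1) by blast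
            moreover have "x \<in> (\<Inter>j\<in>J2. A (n,j))" using x KU(1) K2eq by blast
            ultimately show "x \<in> B \<inter> (\<Inter>j\<in>J2. A (n,j))" unfolding B_def by blast
          qed
          finally show ?thesis .
        qed
        moreover have "(\<Prod>i\<in>insert None (Some ` J2). prob (A' i)) = prob B * (\<Prod>j\<in>J2. prob (A (n,j)))"
          using fin by (simp add: A'_def prod.reindex)
        moreover have "(\<Prod>k\<in>K. prob (A k)) = (\<Prod>k\<in>K1. prob (A k)) * (\<Prod>j\<in>J2. prob (A (n,j)))"
        proof -
          have "(\<Prod>k\<in>K. prob (A k)) = (\<Prod>k\<in>K1. prob (A k)) * (\<Prod>k\<in>K2. prob (A k))"
            unfolding KU(1) using fin KU(2) by (simp add: prod.union_disjoint)
          also have "(\<Prod>k\<in>K2. prob (A k)) = (\<Prod>j\<in>J2. prob (A (n,j)))"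
            unfolding K2eq by (subst prod.reindex) (auto simp: inj_on_def)
          finally show ?thesis .
        qed
        ultimately show ?thesis using probB by simp
      qed
    qed
  qed
  then show ?thesis unfolding G_def by simp
qed

lemma grid_indep:
  assumes P: "prob_space M" and filt: "normal_filtration M T F" and wiener: "cyl_wiener M T F W"
    and t0: "0 \<le> \<tau> 0" and tinc: "\<And>i. \<tau> i < \<tau> (Suc i)" and tN: "\<tau> N \<le> T"
  shows "prob_space.indep_vars M (\<lambda>_. borel)
     (\<lambda>(i,j) \<omega>. W j (\<tau> (Suc i)) \<omega> - W j (\<tau> i) \<omega>) ({..<N} \<times> J)"
proof -
  interpret prob_space M by (rule P)
  have mono: "\<tau> i \<le> \<tau> k" if "i \<le> k" for i k
    using lift_Suc_mono_le[of \<tau> i k] tinc that by (simp add: less_imp_le)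
  have inT: "\<tau> i \<in> {0..T}" if "i \<le> N" for i
    using mono[of 0 i] mono[of i N] that t0 tN by auto
  show ?thesis unfolding indep_vars_def2
  proof
    show "\<forall>i\<in>{..<N} \<times> J. random_variable borel ((\<lambda>(i,j) \<omega>. W j (\<tau> (Suc i)) \<omega> - W j (\<tau> i) \<omega>) i)"
    proof
      fix k assume "k \<in> {..<N} \<times> J"
      then obtain i j where k: "k = (i,j)" "i < N" by auto
      show "random_variable borel ((\<lambda>(i,j) \<omega>. W j (\<tau> (Suc i)) \<omega> - W j (\<tau> i) \<omega>) k)"
        using incr_meas(2)[OF filt wiener inT[of i] inT[of "Suc i"] mono[of i "Suc i"]] k by auto
    qed
    show "indep_sets (\<lambda>k. {(\<lambda>(i,j) \<omega>. W j (\<tau> (Suc i)) \<omega> - W j (\<tau> i) \<omega>) k -` A \<inter> space M | A. A \<in> sets borel})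
       ({..<N} \<times> J)"
      using grid_indep_sets[OF P filt wiener t0 tinc tN, of J]
      by (simp add: case_prod_unfold)
  qed
qed

lemma gauss_sum_moment:
  assumes P: "prob_space M" and filt: "normal_filtration M T F" and wiener: "cyl_wiener M T F W"
    and t0: "0 \<le> \<tau> 0" and tinc: "\<And>i. \<tau> i < \<tau> (Suc i)" and tN: "\<tau> N \<le> T"
    and J: "finite J" and p: "p \<ge> 2"
  shows "(\<integral>\<^sup>+\<omega>. ennreal (\<bar>\<Sum>k\<in>{..<N} \<times> J. c k * (W (snd k) (\<tau> (Suc (fst k))) \<omega> - W (snd k) (\<tau> (fst k)) \<omega>)\<bar> powr p) \<partial>M)
     \<le> ennreal ((p*(p-1)/2) powr (p/2) * (\<Sum>k\<in>{..<N} \<times> J. (c k)^2 * (\<tau> (Suc (fst k)) - \<tau> (fst k))) powr (p/2))"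
proof -
  interpret prob_space M by (rule P)
  define X where "X = (\<lambda>(i,j) \<omega>. W j (\<tau> (Suc i)) \<omega> - W j (\<tau> i) \<omega>)"
  have Xk: "X k \<omega> = W (snd k) (\<tau> (Suc (fst k))) \<omega> - W (snd k) (\<tau> (fst k)) \<omega>" for k \<omega>
    unfolding X_def by (cases k) auto
  define I where "I = {..<N} \<times> J"
  define G where "G = {k\<in>I. c k \<noteq> 0}"
  define V where "V = (\<Sum>k\<in>I. (c k)^2 * (\<tau> (Suc (fst k)) - \<tau> (fst k)))"
  define Kp where "Kp = (p*(p-1)/2) powr (p/2)"
  have finI: "finite I" "finite G" using J unfolding I_def G_def by auto
  have Ssum: "(\<Sum>k\<in>I. c k * X k \<omega>) = (\<Sum>k\<in>G. c k * X k \<omega>)" for \<omega>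
    unfolding G_def by (rule sum.mono_neutral_right) (use finI in auto)
  have mono: "\<tau> i \<le> \<tau> k" if "i \<le> k" for i k
    using lift_Suc_mono_le[of \<tau> i k] tinc that by (simp add: less_imp_le)
  have inT: "\<tau> i \<in> {0..T}" if "i \<le> N" for i
    using mono[of 0 i] mono[of i N] that t0 tN by auto
  have Ssum': "(\<Sum>k\<in>{..<N} \<times> J. c k * (W (snd k) (\<tau> (Suc (fst k))) \<omega> - W (snd k) (\<tau> (fst k)) \<omega>))
      = (\<Sum>k\<in>G. c k * X k \<omega>)" for \<omega>
    using Ssum[of \<omega>] unfolding I_def Xk .
  have lhs: "(\<integral>\<^sup>+\<omega>. ennreal (\<bar>\<Sum>k\<in>{..<N} \<times> J. c k * (W (snd k) (\<tau> (Suc (fst k))) \<omega> - W (snd k) (\<tau> (fst k)) \<omega>)\<bar> powr p) \<partial>M)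
      = (\<integral>\<^sup>+\<omega>. ennreal (\<bar>\<Sum>k\<in>G. c k * X k \<omega>\<bar> powr p) \<partial>M)"
    by (intro nn_integral_cong) (simp only: Ssum')
  show ?thesis
  proof (cases "G = {}")
    case True
    then show ?thesis unfolding lhs using p by simp
  next
    case False
    have indep: "indep_vars (\<lambda>_. borel) X I"
      unfolding X_def I_def by (rule grid_indep[OF P filt wiener t0 tinc tN])
    have indep2: "indep_vars (\<lambda>_. borel) (\<lambda>k \<omega>. c k * X k \<omega>) G"
      by (rule indep_vars_compose2[where X=X, OF indep_vars_subset[OF indep]]) (auto simp: G_def)
    define sd where "sd = (\<lambda>k. \<bar>c k\<bar> * sqrt (\<tau> (Suc (fst k)) - \<tau> (fst k)))"
    have sdpos: "0 < sd k" if "k \<in> G" for k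
      using that tinc[of "fst k"] unfolding sd_def G_def by simp
    have dist: "distributed M lborel (\<lambda>\<omega>. c k * X k \<omega>) (normal_density 0 (sd k))" if "k \<in> G" for k
    proof -
      note that' = that
      obtain i j where k: "k = (i,j)" "i < N"
      proof -
        have "fst k < N" using that' unfolding G_def I_def by auto
        then show ?thesis using that by (metis prod.collapse)
      qed
      have d0: "distributed M lborel (X k) (normal_density 0 (sqrt (\<tau> (Suc i) - \<tau> i)))"
        using wiener inT[of i] inT[of "Suc i"] tinc[of i] k unfolding cyl_wiener_def X_def by auto
      have "distributed M lborel (\<lambda>\<omega>. 0 + c k * X k \<omega>)
          (normal_density (0 + c k * 0) (\<bar>c k\<bar> * sqrt (\<tau> (Suc i) - \<tau> i)))"
        by (rule normal_density_affine[OF d0]) (use tinc[of i] that in \<open>auto simp: G_def\<close>)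
      then show ?thesis unfolding sd_def k by simp
    qed
    define \<sigma> where "\<sigma> = sqrt (\<Sum>k\<in>G. (sd k)^2)"
    have Sdist: "distributed M lborel (\<lambda>\<omega>. \<Sum>k\<in>G. c k * X k \<omega>) (normal_density 0 \<sigma>)"
      using sum_indep_normal[OF finI(2) False indep2 sdpos dist] unfolding \<sigma>_def by simp
    have sig_pos: "\<sigma> > 0"
    proof -
      have "0 < (\<Sum>k\<in>G. (sd k)^2)"
      proof (rule sum_pos)
        fix k assume "k \<in> G" then show "0 < (sd k)^2" using sdpos[of k] by simp
      qed (use False finI in auto)
      then show ?thesis unfolding \<sigma>_def by simp
    qed
    have sig2: "\<sigma>^2 \<le> V"
    proof -
      have "\<sigma>^2 = (\<Sum>k\<in>G. (c k)^2 * (\<tau> (Suc (fst k)) - \<tau> (fst k)))"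
        unfolding \<sigma>_def sd_def using tinc
        by (subst real_sqrt_pow2) (auto intro!: sum_nonneg sum.cong simp: power_mult_distrib less_imp_le)
      also have "\<dots> \<le> V" unfolding V_def G_def using finI tinc
        by (intro sum_mono2) (auto simp: less_imp_le)
      finally show ?thesis .
    qed
    have "(\<integral>\<^sup>+\<omega>. ennreal (\<bar>\<Sum>k\<in>G. c k * X k \<omega>\<bar> powr p) \<partial>M)
        = (\<integral>\<^sup>+x. ennreal (normal_density 0 \<sigma> x) * ennreal (\<bar>x\<bar> powr p) \<partial>lborel)"
      by (rule distributed_nn_integral[OF Sdist, symmetric]) measurable
    also have "\<dots> = (\<integral>\<^sup>+x. ennreal (normal_density 0 \<sigma> x * \<bar>x\<bar> powr p) \<partial>lborel)"
      by (simp add: ennreal_mult')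
    also have "\<dots> \<le> ennreal (Kp * \<sigma> powr p)"
      unfolding Kp_def by (rule gauss_moment_bound[OF sig_pos p])
    also have "Kp * \<sigma> powr p \<le> Kp * V powr (p/2)"
    proof (intro mult_left_mono)
      have e1: "\<sigma> powr 2 = \<sigma>^2" using powr_realpow[OF sig_pos, of 2] by simp
      have "\<sigma> powr p = (\<sigma> powr 2) powr (p/2)" by (simp add: powr_powr)
      also have "\<dots> = (\<sigma>^2) powr (p/2)" by (simp only: e1)
      also have "\<dots> \<le> V powr (p/2)" using sig2 p by (intro powr_mono2) auto
      finally show "\<sigma> powr p \<le> V powr (p/2)" .
    qed (simp add: Kp_def)
    finally show ?thesis unfolding lhs V_def I_def Kp_def by (simp add: ennreal_leI)
  qed
qed

lemma W_M:
  assumes filt: "normal_filtration M T F" and wiener: "cyl_wiener M T F W" and s: "s \<in> {0..T}"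
  shows "W j s \<in> borel_measurable M"
proof -
  have "subalgebra M (FMs M F s)"
    unfolding subalgebra_def using FMs_facts[OF filt s] by auto
  then show ?thesis using W_meas[OF filt wiener s s order_refl] by (rule measurable_from_subalg)
qed

lemma riemann_meas:
  assumes filt: "normal_filtration M T F" and wiener: "cyl_wiener M T F W" and t: "t \<in> {0..T}"
  shows "riemann_sum W phi t N m \<in> borel_measurable M"
proof -
  have tt: "real i * t / real N \<in> {0..T}" if "i \<le> N" for i
  proof (cases "N = 0")
    case True then show ?thesis using t by simp
  next
    case False
    have "real i * t / real N \<le> real N * t / real N"
      using that t False by (intro divide_right_mono mult_right_mono) auto
    then show ?thesis using t False by auto
  qed
  have "(\<lambda>\<omega>. \<Sum>i<N. \<Sum>j\<in>{- int m..int m}.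
        phi (real i * t / real N) j *
          (W j (real (Suc i) * t / real N) \<omega> - W j (real i * t / real N) \<omega>)) \<in> borel_measurable M"
  proof (intro borel_measurable_sum borel_measurable_times borel_measurable_diff borel_measurable_const)
    fix i j assume "i \<in> {..<N}"
    then show "W j (real (Suc i) * t / real N) \<in> borel_measurable M" "W j (real i * t / real N) \<in> borel_measurable M"
      using W_M[OF filt wiener tt[of "Suc i"]] W_M[OF filt wiener tt[of i]] by auto
  qed
  then show ?thesis unfolding riemann_sum_def[abs_def] .
qed

lemma riemann_moment:
  assumes P: "prob_space M" and filt: "normal_filtration M T F" and wiener: "cyl_wiener M T F W"
    and t: "t \<in> {0..T}" and p: "p \<ge> 2"
    and Vb: "\<And>N m. (\<Sum>i<N. \<Sum>j\<in>{- int m..int m}. (phi (real i * t / real N) j)^2 * (t / real N)) \<le> V"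
  shows "(\<integral>\<^sup>+\<omega>. ennreal (\<bar>riemann_sum W phi t N m \<omega>\<bar> powr p) \<partial>M)
     \<le> ennreal ((p*(p-1)/2) powr (p/2) * V powr (p/2))"
proof (cases "t = 0 \<or> N = 0")
  case True
  then have "riemann_sum W phi t N m \<omega> = 0" for \<omega> unfolding riemann_sum_def by auto
  then show ?thesis using p by simp
next
  case False
  then have tp: "t > 0" "N > 0" using t by auto
  define \<tau> where "\<tau> = (\<lambda>i. real i * t / real N)"
  have tinc: "\<tau> i < \<tau> (Suc i)" for i unfolding \<tau>_def using tp by (simp add: divide_strict_right_mono)
  have tN: "\<tau> N \<le> T" unfolding \<tau>_def using tp t by simp
  have t0: "0 \<le> \<tau> 0" unfolding \<tau>_def by simp
  define J where "J = {- int m..int m}"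
  define c where "c = (\<lambda>k. phi (\<tau> (fst k)) (snd k))"
  have rs: "riemann_sum W phi t N m \<omega> =
     (\<Sum>k\<in>{..<N} \<times> J. c k * (W (snd k) (\<tau> (Suc (fst k))) \<omega> - W (snd k) (\<tau> (fst k)) \<omega>))" for \<omega>
    unfolding riemann_sum_def c_def \<tau>_def J_def
    by (simp add: sum.cartesian_product case_prod_unfold)
  have var: "(\<Sum>k\<in>{..<N} \<times> J. (c k)^2 * (\<tau> (Suc (fst k)) - \<tau> (fst k))) =
      (\<Sum>i<N. \<Sum>j\<in>{- int m..int m}. (phi (real i * t / real N) j)^2 * (t / real N))"
  proof -
    have d: "\<tau> (Suc i) - \<tau> i = t / real N" for i unfolding \<tau>_def by (simp add: diff_divide_distrib[symmetric] algebra_simps)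
    show ?thesis unfolding c_def J_def d
      by (simp add: sum.cartesian_product case_prod_unfold \<tau>_def)
  qed
  have "(\<integral>\<^sup>+\<omega>. ennreal (\<bar>riemann_sum W phi t N m \<omega>\<bar> powr p) \<partial>M)
     \<le> ennreal ((p*(p-1)/2) powr (p/2) * (\<Sum>k\<in>{..<N} \<times> J. (c k)^2 * (\<tau> (Suc (fst k)) - \<tau> (fst k))) powr (p/2))"
    unfolding rs by (rule gauss_sum_moment[OF P filt wiener t0 tinc tN]) (use p in \<open>auto simp: J_def\<close>)
  also have "\<dots> \<le> ennreal ((p*(p-1)/2) powr (p/2) * V powr (p/2))"
  proof (intro ennreal_leI mult_left_mono powr_mono2)
    show "0 \<le> (\<Sum>k\<in>{..<N} \<times> J. (c k)^2 * (\<tau> (Suc (fst k)) - \<tau> (fst k)))"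
      using tinc by (intro sum_nonneg mult_nonneg_nonneg) (auto simp: less_imp_le)
    show "(\<Sum>k\<in>{..<N} \<times> J. (c k)^2 * (\<tau> (Suc (fst k)) - \<tau> (fst k))) \<le> V"
      unfolding var by (rule Vb)
  qed (use p in auto)
  finally show ?thesis .
qed

lemma stoch_int_moment:
  assumes P: "prob_space M" and filt: "normal_filtration M T F" and wiener: "cyl_wiener M T F W"
    and t: "t \<in> {0..T}" and p: "p \<ge> 2"
    and Z: "is_stoch_int_coord M W phi t Z"
    and Vb: "\<And>N m. (\<Sum>i<N. \<Sum>j\<in>{- int m..int m}. (phi (real i * t / real N) j)^2 * (t / real N)) \<le> V"
  shows "(\<integral>\<^sup>+\<omega>. ennreal (\<bar>Z \<omega>\<bar> powr p) \<partial>M)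
     \<le> ennreal ((p*(p-1)/2) powr (p/2) * V powr (p/2))"
proof -
  define S where "S = (\<lambda>n. riemann_sum W phi t n n)"
  define B where "B = ennreal ((p*(p-1)/2) powr (p/2) * V powr (p/2))"
  have Zm: "Z \<in> borel_measurable M" using Z unfolding is_stoch_int_coord_def by auto
  have Sm: "S n \<in> borel_measurable M" for n unfolding S_def by (rule riemann_meas[OF filt wiener t])
  have int: "integrable M (\<lambda>\<omega>. (Z \<omega> - S n \<omega>)^2)" for n
    using Z unfolding is_stoch_int_coord_def S_def by auto
  have lim2: "((\<lambda>(N, m). LINT \<omega>|M. (Z \<omega> - riemann_sum W phi t N m \<omega>)\<^sup>2) \<longlongrightarrow> 0)
        (sequentially \<times>\<^sub>F sequentially)"
    using Z unfolding is_stoch_int_coord_def by auto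
  have diag: "filterlim (\<lambda>n::nat. (n, n)) (sequentially \<times>\<^sub>F sequentially) sequentially"
    by (intro filterlim_Pair filterlim_ident)
  have "((\<lambda>n. (\<lambda>(N, m). LINT \<omega>|M. (Z \<omega> - riemann_sum W phi t N m \<omega>)\<^sup>2) (n, n)) \<longlongrightarrow> 0) sequentially"
    by (rule filterlim_compose[OF lim2 diag])
  then have lim: "(\<lambda>n. (\<integral>\<omega>. norm ((Z \<omega> - S n \<omega>)^2) \<partial>M)) \<longlonglongrightarrow> 0"
    unfolding S_def by simp
  obtain r :: "nat \<Rightarrow> nat" where r: "strict_mono r"
    and ae: "AE \<omega> in M. (\<lambda>n. (Z \<omega> - S (r n) \<omega>)^2) \<longlonglongrightarrow> 0"
    using tendsto_L1_AE_subseq[of M "\<lambda>n \<omega>. (Z \<omega> - S n \<omega>)^2", OF int lim] by blast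
  have ae2: "AE \<omega> in M. (\<lambda>n. ennreal (\<bar>S (r n) \<omega>\<bar> powr p)) \<longlonglongrightarrow> ennreal (\<bar>Z \<omega>\<bar> powr p)"
    using ae
  proof eventually_elim
    case (elim \<omega>)
    have "(\<lambda>n. sqrt ((Z \<omega> - S (r n) \<omega>)^2)) \<longlonglongrightarrow> sqrt 0"
      by (intro tendsto_real_sqrt elim)
    then have "(\<lambda>n. \<bar>Z \<omega> - S (r n) \<omega>\<bar>) \<longlonglongrightarrow> 0" by simp
    then have "(\<lambda>n. Z \<omega> - S (r n) \<omega>) \<longlonglongrightarrow> 0" by (simp add: tendsto_rabs_zero_iff)
    then have "(\<lambda>n. Z \<omega> - (Z \<omega> - S (r n) \<omega>)) \<longlonglongrightarrow> Z \<omega> - 0" by (intro tendsto_intros)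
    then have "(\<lambda>n. S (r n) \<omega>) \<longlonglongrightarrow> Z \<omega>" by simp
    then have "(\<lambda>n. \<bar>S (r n) \<omega>\<bar> powr p) \<longlonglongrightarrow> \<bar>Z \<omega>\<bar> powr p"
      using p by (intro tendsto_powr' tendsto_rabs) auto
    then show ?case by (rule tendsto_ennrealI)
  qed
  have "(\<integral>\<^sup>+\<omega>. ennreal (\<bar>Z \<omega>\<bar> powr p) \<partial>M) = (\<integral>\<^sup>+\<omega>. liminf (\<lambda>n. ennreal (\<bar>S (r n) \<omega>\<bar> powr p)) \<partial>M)"
  proof (rule nn_integral_cong_AE)
    show "AE \<omega> in M. ennreal (\<bar>Z \<omega>\<bar> powr p) = liminf (\<lambda>n. ennreal (\<bar>S (r n) \<omega>\<bar> powr p))"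
      using ae2 by eventually_elim (metis lim_imp_Liminf trivial_limit_sequentially)
  qed
  also have "\<dots> \<le> liminf (\<lambda>n. \<integral>\<^sup>+\<omega>. ennreal (\<bar>S (r n) \<omega>\<bar> powr p) \<partial>M)"
    by (rule nn_integral_liminf) (use Sm in measurable)
  also have "\<dots> \<le> B"
  proof (rule Liminf_le)
    show "\<forall>\<^sub>F n in sequentially. (\<integral>\<^sup>+\<omega>. ennreal (\<bar>S (r n) \<omega>\<bar> powr p) \<partial>M) \<le> B"
      unfolding S_def B_def using riemann_moment[OF P filt wiener t p Vb] by simp
  qed simp
  finally show ?thesis unfolding B_def .
qed

lemma Bmat_sq_sum:
  assumes k: "k \<noteq> 0" and J: "finite J"
  shows "(\<Sum>j\<in>J. (Bmat b bt k j)^2) \<le> (b k)^2 + (bt k)^2"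
proof -
  have e: "(Bmat b bt k j)^2 = (if j = k then (b k)^2 else 0) + (if j = -k then (bt k)^2 else 0)" for j
    using k unfolding Bmat_def by (auto simp: power2_eq_square)
  have "(\<Sum>j\<in>J. (Bmat b bt k j)^2) = (if k \<in> J then (b k)^2 else 0) + (if -k \<in> J then (bt k)^2 else 0)"
    unfolding e sum.distrib using J by (simp add: sum.delta)
  also have "\<dots> \<le> (b k)^2 + (bt k)^2" by auto
  finally show ?thesis .
qed

lemma geom_bound:
  fixes lam t :: real and N :: nat
  assumes lam: "lam > 0" and t: "t \<ge> 0"
  shows "(\<Sum>i<N. exp (-2*lam*(t - real i * t / real N)) * (t / real N)) \<le> (1 - exp (-2*lam*t)) / (2*lam)"
proof (cases "t = 0 \<or> N = 0")
  case True
  then show ?thesis using lam t by auto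
next
  case False
  then have tp: "t > 0" and Np: "N > 0" using t by auto
  define h where "h = t / real N"
  have hp: "h > 0" unfolding h_def using tp Np by simp
  define q where "q = exp (-2*lam*h)"
  have q01: "0 < q" "q < 1" unfolding q_def using lam hp by auto
  have tq: "exp (-2*lam*(t - real i * t / real N)) = q^(N - i)" if "i < N" for i
  proof -
    have d: "t - real i * t / real N = real (N - i) * h" unfolding h_def using that Np
      by (simp add: of_nat_diff field_simps)
    have "-2*lam*(t - real i * t / real N) = real (N - i) * (-2*lam*h)"
      by (simp only: d) (simp add: algebra_simps)
    then have "exp (-2*lam*(t - real i * t / real N)) = exp (real (N - i) * (-2*lam*h))"
      by (rule arg_cong)
    also have "\<dots> = q^(N-i)" unfolding q_def by (rule exp_of_nat_mult)
    finally show ?thesis .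
  qed
  have "(\<Sum>i<N. exp (-2*lam*(t - real i * t / real N)) * (t / real N)) = h * (\<Sum>i<N. q^(N - i))"
    unfolding h_def using tq by (simp add: sum_distrib_left mult.commute)
  also have "(\<Sum>i<N. q^(N - i)) = (\<Sum>i<N. q^(Suc (N - Suc i)))"
    by (intro sum.cong) (auto simp: Suc_diff_Suc)
  also have "\<dots> = (\<Sum>i<N. q^(Suc i))"
    by (rule sum.nat_diff_reindex)
  also have "\<dots> = q * (1 - q^N) / (1 - q)"
    using q01 by (simp add: sum_distrib_left[symmetric] sum_gp_strict)
  also have "q^N = exp (-2*lam*t)"
    unfolding q_def h_def using Np by (simp add: exp_of_nat_mult[symmetric])
  finally have eq: "(\<Sum>i<N. exp (-2*lam*(t - real i * t / real N)) * (t / real N)) =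
      (h * q / (1 - q)) * (1 - exp (-2*lam*t))" by simp
  have "h * q / (1 - q) \<le> 1 / (2*lam)"
  proof -
    have ex: "1 + 2*lam*h \<le> exp (2*lam*h)" by (rule exp_ge_add_one_self)
    have "2*lam*h * q \<le> (exp (2*lam*h) - 1) * q"
    proof (rule mult_right_mono)
      show "2*lam*h \<le> exp (2*lam*h) - 1" using ex by linarith
      show "0 \<le> q" using q01 by simp
    qed
    also have "\<dots> = 1 - q" unfolding q_def by (simp add: algebra_simps exp_minus_inverse)
    finally have "2*lam*h * q \<le> 1 - q" .
    then show ?thesis using q01 lam by (simp add: field_simps)
  qed
  moreover have "0 \<le> 1 - exp (-2*lam*t)" using lam t by simp
  ultimately have "(h * q / (1 - q)) * (1 - exp (-2*lam*t)) \<le> (1 / (2*lam)) * (1 - exp (-2*lam*t))"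
    by (intro mult_right_mono) auto
  then show ?thesis unfolding eq by simp
qed

lemma key_ineq:
  fixes lam t T \<gamma> \<epsilon> \<beta> \<rho> :: real and n :: nat
  assumes lam: "lam \<ge> real n ^ 4" and n: "n \<ge> 1" and t: "0 \<le> t" "t \<le> T"
    and g: "0 < \<gamma>" "\<gamma> < 1" and gdef: "\<gamma> = \<beta> - 2*\<rho> - 2*\<epsilon>" and e: "\<epsilon> \<ge> 0"
  shows "lam powr (2*\<rho>) * ((1 - exp (-2*lam*t)) / (2*lam))
          \<le> lam powr (\<beta> - 1) * (real n powr (-4*\<epsilon>))^2 * (T powr \<gamma> / \<gamma>)"
proof -
  have lp: "lam > 0" using lam n
    by (smt (verit) of_nat_0_less_iff less_le_trans one_le_power of_nat_1 of_nat_le_iff)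
  have split: "lam powr (2*\<rho>) / lam = lam powr (\<beta> - 1) * lam powr (-2*\<epsilon>) * lam powr (-\<gamma>)"
  proof -
    have "lam powr (2*\<rho>) / lam = lam powr (2*\<rho>) / lam powr 1" using lp by simp
    also have "\<dots> = lam powr (2*\<rho> - 1)" by (rule powr_diff[symmetric])
    also have "2*\<rho> - 1 = (\<beta> - 1) + (-2*\<epsilon>) + (-\<gamma>)" using gdef by simp
    also have "lam powr ((\<beta> - 1) + (-2*\<epsilon>) + (-\<gamma>)) = lam powr (\<beta> - 1) * lam powr (-2*\<epsilon>) * lam powr (-\<gamma>)"
      by (simp only: powr_add)
    finally show ?thesis .
  qed
  have A: "lam powr (-2*\<epsilon>) \<le> (real n powr (-4*\<epsilon>))^2"
  proof -
    have np: "real n > 0" using n by simp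
    have "lam powr (-2*\<epsilon>) \<le> (real n ^ 4) powr (-2*\<epsilon>)"
      using np lam e by (intro powr_mono2') auto
    also have "(real n ^ 4) powr (-2*\<epsilon>) = (real n powr (-4*\<epsilon>))^2"
    proof -
      have e4: "real n powr 4 = real n ^ 4" using powr_realpow[OF np, of 4] by simp
      have "(real n ^ 4) powr (-2*\<epsilon>) = (real n powr 4) powr (-2*\<epsilon>)" by (simp only: e4)
      also have "\<dots> = real n powr (4 * (-2*\<epsilon>))" by (rule powr_powr)
      also have "\<dots> = real n powr (-4*\<epsilon> + -4*\<epsilon>)" by (simp add: algebra_simps)
      also have "\<dots> = (real n powr (-4*\<epsilon>))^2" by (simp only: powr_add power2_eq_square)
      finally show ?thesis .
    qed
    finally show ?thesis .
  qed
  have B: "lam powr (-\<gamma>) * ((1 - exp (-2*lam*t)) / 2) \<le> T powr \<gamma> / \<gamma>"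
  proof (cases "t = 0")
    case True then show ?thesis using g by simp
  next
    case False
    then have tp: "t > 0" using t by simp
    define y where "y = lam * t"
    have yp: "y > 0" unfolding y_def using lp tp by simp
    have lamy: "lam = y / t" unfolding y_def using tp by simp
    have tg: "t powr \<gamma> \<le> T powr \<gamma>" using t tp g by (intro powr_mono2) auto
    have tg2: "T powr \<gamma> \<le> T powr \<gamma> / \<gamma>"
    proof -
      have "T powr \<gamma> * \<gamma> \<le> T powr \<gamma> * 1" by (intro mult_left_mono) (use g in auto)
      then show ?thesis using g by (simp add: le_divide_eq)
    qed
    have lg: "lam powr (-\<gamma>) = t powr \<gamma> * y powr (-\<gamma>)"
    proof -
      have "(y/t) powr (-\<gamma>) = y powr (-\<gamma>) / t powr (-\<gamma>)" using yp tp by (intro powr_divide)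
      moreover have "t powr (-\<gamma>) = inverse (t powr \<gamma>)" by (rule powr_minus)
      ultimately show ?thesis unfolding lamy by (simp add: divide_inverse mult.commute)
    qed
    show ?thesis
    proof (cases "y \<le> 1")
      case True
      have "(1 - exp (-2*lam*t)) / 2 \<le> y"
        using exp_ge_add_one_self[of "-2*lam*t"] unfolding y_def by (simp add: algebra_simps)
      then have c1: "lam powr (-\<gamma>) * ((1 - exp (-2*lam*t)) / 2) \<le> t powr \<gamma> * y powr (-\<gamma>) * y"
        unfolding lg by (intro mult_left_mono) auto
      have c2: "y powr (-\<gamma>) * y = y powr (1 - \<gamma>)"
        using yp by (simp add: powr_diff powr_minus divide_inverse mult.commute)
      have c3: "y powr (1 - \<gamma>) \<le> 1" using True yp g by (intro powr_le1) auto
      have "t powr \<gamma> * y powr (-\<gamma>) * y = t powr \<gamma> * y powr (1 - \<gamma>)"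
        using c2 by (simp add: mult.assoc)
      also have "\<dots> \<le> t powr \<gamma> * 1" using c3 by (intro mult_left_mono) auto
      finally show ?thesis using c1 tg tg2 by linarith
    next
      case False
      have ep: "exp (-2*lam*t) > 0" by simp
      have "1 - exp (-2*lam*t) \<le> 2" using ep by linarith
      then have "(1 - exp (-2*lam*t)) / 2 \<le> 1" by simp
      then have "lam powr (-\<gamma>) * ((1 - exp (-2*lam*t)) / 2) \<le> t powr \<gamma> * y powr (-\<gamma>) * 1"
        unfolding lg by (intro mult_left_mono) auto
      also have "y powr (-\<gamma>) \<le> 1" using ge_one_powr_ge_zero[of y \<gamma>] False g yp by (simp add: powr_minus inverse_le_1_iff)
      then have "t powr \<gamma> * y powr (-\<gamma>) * 1 \<le> t powr \<gamma>" by (simp add: mult_left_le)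
      finally show ?thesis using tg tg2 by linarith
    qed
  qed
  have "lam powr (2*\<rho>) * ((1 - exp (-2*lam*t)) / (2*lam))
      = lam powr (\<beta> - 1) * lam powr (-2*\<epsilon>) * (lam powr (-\<gamma>) * ((1 - exp (-2*lam*t)) / 2))"
    using split lp by (simp add: field_simps)
  also have "\<dots> \<le> lam powr (\<beta> - 1) * (real n powr (-4*\<epsilon>))^2 * (T powr \<gamma> / \<gamma>)"
  proof (intro mult_mono A B)
    show "0 \<le> lam powr (-\<gamma>) * ((1 - exp (-2*lam*t)) / 2)" using lp t by simp
  qed auto
  finally show ?thesis .
qed

lemma powr_cancel_pos: "(x::real) > 0 \<Longrightarrow> x powr (q - 1) * x powr (1 - q) = 1"
  by (simp add: powr_add[symmetric])

lemma two_term: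
  fixes q S s A a :: real
  assumes q: "q \<ge> 1" and nn: "S \<ge> 0" "s \<ge> 0" "A \<ge> 0" "a \<ge> 0"
    and z1: "S = 0 \<Longrightarrow> A = 0" and z2: "s = 0 \<Longrightarrow> a = 0"
  shows "(A + a) powr q \<le> (S + s) powr (q-1) * (S powr (1-q) * A powr q + s powr (1-q) * a powr q)"
proof -
  have rhs_nn: "0 \<le> (S + s) powr (q-1) * (S powr (1-q) * A powr q + s powr (1-q) * a powr q)"
    by simp
  consider "A = 0" "a = 0" | "A = 0" "a > 0" | "A > 0" "a = 0" | "A > 0" "a > 0"
    using nn by linarith
  then show ?thesis
  proof cases
    case 1 then show ?thesis using q rhs_nn by simp
  next
    case 2
    then have sp: "s > 0" using z2 nn by force
    have "a powr q = (s powr (q-1) * s powr (1-q)) * a powr q" using powr_cancel_pos[OF sp] by simp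
    also have "\<dots> \<le> ((S + s) powr (q-1) * s powr (1-q)) * a powr q"
      using nn q sp by (intro mult_right_mono powr_mono2) auto
    finally show ?thesis using 2 q by (simp add: mult.assoc)
  next
    case 3
    then have Sp: "S > 0" using z1 nn by force
    have "A powr q = (S powr (q-1) * S powr (1-q)) * A powr q" using powr_cancel_pos[OF Sp] by simp
    also have "\<dots> \<le> ((S + s) powr (q-1) * S powr (1-q)) * A powr q"
      using nn q Sp by (intro mult_right_mono powr_mono2) auto
    finally show ?thesis using 3 q by (simp add: mult.assoc)
  next
    case 4
    then have Sp: "S > 0" and sp: "s > 0" using z1 z2 nn by force+
    define w where "w = s / (S + s)"
    have w01: "0 \<le> w" "w \<le> 1" unfolding w_def using Sp sp by auto
    have cv: "convex_on {0<..} (\<lambda>x::real. x powr q)" by (rule powr_convex[OF q])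
    have conv: "((1 - w) *\<^sub>R (A/S) + w *\<^sub>R (a/s)) powr q \<le> (1 - w) * (A/S) powr q + w * (a/s) powr q"
      by (rule convex_onD[OF cv w01]) (use 4 Sp sp in auto)
    have w1: "1 - w = S/(S+s)" unfolding w_def using Sp sp by (simp add: field_simps)
    have "(1 - w) *\<^sub>R (A/S) + w *\<^sub>R (a/s) = (S/(S+s)) * (A/S) + (s/(S+s)) * (a/s)"
      by (simp add: w1) (simp add: w_def)
    also have "\<dots> = A/(S+s) + a/(S+s)" using Sp sp by simp
    also have "\<dots> = (A + a) / (S + s)" by (simp add: add_divide_distrib)
    finally have eq: "(1 - w) *\<^sub>R (A/S) + w *\<^sub>R (a/s) = (A + a) / (S + s)" .
    have c: "((A + a) / (S + s)) powr q \<le> (S/(S+s)) * (A/S) powr q + (s/(S+s)) * (a/s) powr q"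
      using conv[unfolded eq, unfolded w1] by (simp add: w_def)
    have Ssp: "S + s > 0" using Sp sp by simp
    have "(A + a) powr q = (S + s) powr q * ((A + a) / (S + s)) powr q"
      using Ssp 4 by (simp add: powr_divide)
    also have "\<dots> \<le> (S + s) powr q * ((S/(S+s)) * (A/S) powr q + (s/(S+s)) * (a/s) powr q)"
      using c by (intro mult_left_mono) auto
    also have "\<dots> = (S + s) powr (q-1) * (S powr (1-q) * A powr q + s powr (1-q) * a powr q)"
    proof -
      have e1: "(S + s) powr q = (S + s) powr (q - 1) * (S + s)" using Ssp by (simp add: powr_diff)
      have e2: "S * (A/S) powr q = S powr (1-q) * A powr q"
        using Sp 4 by (simp add: powr_divide powr_diff)
      have e3: "s * (a/s) powr q = s powr (1-q) * a powr q"
        using sp 4 by (simp add: powr_divide powr_diff)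
      have f1: "(S/(S+s)) * (A/S) powr q + (s/(S+s)) * (a/s) powr q
          = (S * (A/S) powr q + s * (a/s) powr q) / (S+s)"
        by (simp add: add_divide_distrib)
      have f2: "(S + s) powr (q - 1) * (S + s) * ((S * (A/S) powr q + s * (a/s) powr q) / (S+s))
          = (S + s) powr (q - 1) * (S * (A/S) powr q + s * (a/s) powr q)"
        using Ssp by simp
      show ?thesis unfolding e1 f1 e2 e3 using Ssp by simp
    qed
    finally show ?thesis .
  qed
qed

lemma finite_pt:
  fixes q :: real and a s :: "'k \<Rightarrow> real"
  assumes q: "q \<ge> 1" and K: "finite K"
    and nn: "\<And>k. k \<in> K \<Longrightarrow> a k \<ge> 0" "\<And>k. k \<in> K \<Longrightarrow> s k \<ge> 0"
    and z: "\<And>k. k \<in> K \<Longrightarrow> s k = 0 \<Longrightarrow> a k = 0"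
  shows "(\<Sum>k\<in>K. a k) powr q \<le> (\<Sum>k\<in>K. s k) powr (q-1) * (\<Sum>k\<in>K. s k powr (1-q) * a k powr q)"
  using K nn z
proof (induction K rule: finite_induct)
  case empty then show ?case using q by simp
next
  case (insert k K)
  define A where "A = (\<Sum>k\<in>K. a k)"
  define S where "S = (\<Sum>k\<in>K. s k)"
  define R where "R = (\<Sum>k\<in>K. s k powr (1-q) * a k powr q)"
  have A0: "A \<ge> 0" "S \<ge> 0" "R \<ge> 0" unfolding A_def S_def R_def using insert by (auto intro!: sum_nonneg)
  have z1: "A = 0" if "S = 0"
  proof -
    have "\<forall>j\<in>K. s j = 0" using that insert sum_nonneg_eq_0_iff[of K s] unfolding S_def by auto
    then show ?thesis unfolding A_def using insert by auto
  qed
  have IH: "A powr q \<le> S powr (q-1) * R" unfolding A_def S_def R_def using insert by auto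
  have tt: "(A + a k) powr q \<le> (S + s k) powr (q-1) * (S powr (1-q) * A powr q + s k powr (1-q) * a k powr q)"
    by (rule two_term[OF q]) (use A0 insert z1 in auto)
  have "S powr (1-q) * A powr q \<le> R"
  proof (cases "S = 0")
    case True then show ?thesis using A0 by simp
  next
    case False
    then have Sp: "S > 0" using A0 by simp
    have "S powr (1-q) * A powr q \<le> S powr (1-q) * (S powr (q-1) * R)"
      using IH by (intro mult_left_mono) auto
    also have "\<dots> = R" using powr_cancel_pos[OF Sp, of q] by (simp add: algebra_simps)
    finally show ?thesis .
  qed
  then have "(S + s k) powr (q-1) * (S powr (1-q) * A powr q + s k powr (1-q) * a k powr q)
      \<le> (S + s k) powr (q-1) * (R + s k powr (1-q) * a k powr q)"
    by (intro mult_left_mono) auto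
  with tt have fin: "(A + a k) powr q \<le> (S + s k) powr (q-1) * (R + s k powr (1-q) * a k powr q)" by simp
  have e1: "(\<Sum>k\<in>insert k K. a k) = A + a k" unfolding A_def using insert.hyps by simp
  have e2: "(\<Sum>k\<in>insert k K. s k) = S + s k" unfolding S_def using insert.hyps by simp
  have e3: "(\<Sum>k\<in>insert k K. s k powr (1-q) * a k powr q) = R + s k powr (1-q) * a k powr q"
    unfolding R_def using insert.hyps by simp
  show ?case unfolding e1 e2 e3 by (rule fin)
qed

lemma finite_mink:
  fixes q :: real and a :: "'k \<Rightarrow> 'a \<Rightarrow> real" and s :: "'k \<Rightarrow> real"
  assumes q: "q \<ge> 1" and K: "finite K"
    and nn: "\<And>k \<omega>. a k \<omega> \<ge> 0" "\<And>k. s k \<ge> 0"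
    and meas: "\<And>k. a k \<in> borel_measurable M"
    and bnd: "\<And>k. (\<integral>\<^sup>+\<omega>. ennreal (a k \<omega> powr q) \<partial>M) \<le> ennreal (s k powr q)"
  shows "(\<integral>\<^sup>+\<omega>. ennreal ((\<Sum>k\<in>K. a k \<omega>) powr q) \<partial>M) \<le> ennreal ((\<Sum>k\<in>K. s k) powr q)"
proof -
  have z: "AE \<omega> in M. a k \<omega> = 0" if "s k = 0" for k
  proof -
    have "(\<integral>\<^sup>+\<omega>. ennreal (a k \<omega> powr q) \<partial>M) \<le> 0"
      using bnd[of k] that by simp
    then have "(\<integral>\<^sup>+\<omega>. ennreal (a k \<omega> powr q) \<partial>M) = 0" by simp
    then have "AE \<omega> in M. ennreal (a k \<omega> powr q) = 0"
      by (subst (asm) nn_integral_0_iff_AE) (use meas in measurable)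
    then show ?thesis by eventually_elim simp
  qed
  have zall: "AE \<omega> in M. \<forall>k\<in>K. s k = 0 \<longrightarrow> a k \<omega> = 0"
  proof (rule AE_finite_allI[OF K])
    fix k assume "k \<in> K"
    show "AE \<omega> in M. s k = 0 \<longrightarrow> a k \<omega> = 0"
    proof (cases "s k = 0")
      case True then show ?thesis using z[OF True] by eventually_elim simp
    qed simp
  qed
  define S where "S = (\<Sum>k\<in>K. s k)"
  have S0: "S \<ge> 0" unfolding S_def using nn by (simp add: sum_nonneg)
  define c where "c = S powr (q-1)"
  define w where "w = (\<lambda>k. s k powr (1-q))"
  have "(\<integral>\<^sup>+\<omega>. ennreal ((\<Sum>k\<in>K. a k \<omega>) powr q) \<partial>M)
      \<le> (\<integral>\<^sup>+\<omega>. ennreal c * (\<Sum>k\<in>K. ennreal (w k) * ennreal (a k \<omega> powr q)) \<partial>M)"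
  proof (rule nn_integral_mono_AE)
    show "AE \<omega> in M. ennreal ((\<Sum>k\<in>K. a k \<omega>) powr q)
        \<le> ennreal c * (\<Sum>k\<in>K. ennreal (w k) * ennreal (a k \<omega> powr q))"
      using zall
    proof eventually_elim
      case (elim \<omega>)
      have le: "(\<Sum>k\<in>K. a k \<omega>) powr q \<le> c * (\<Sum>k\<in>K. w k * a k \<omega> powr q)"
        unfolding S_def c_def w_def by (rule finite_pt[OF q K]) (use nn elim in auto)
      have "ennreal c * (\<Sum>k\<in>K. ennreal (w k) * ennreal (a k \<omega> powr q))
          = ennreal c * (\<Sum>k\<in>K. ennreal (w k * a k \<omega> powr q))"
        unfolding w_def by (intro arg_cong2[where f="(*)"] sum.cong refl ennreal_mult''[symmetric]) simp
      also have "\<dots> = ennreal (c * (\<Sum>k\<in>K. w k * a k \<omega> powr q))"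
      proof -
        have "(\<Sum>k\<in>K. ennreal (w k * a k \<omega> powr q)) = ennreal (\<Sum>k\<in>K. w k * a k \<omega> powr q)"
          unfolding w_def by (rule sum_ennreal) simp
        moreover have "ennreal c * ennreal (\<Sum>k\<in>K. w k * a k \<omega> powr q) = ennreal (c * (\<Sum>k\<in>K. w k * a k \<omega> powr q))"
          unfolding c_def w_def by (rule ennreal_mult[symmetric]) (auto intro!: sum_nonneg)
        ultimately show ?thesis by simp
      qed
      finally show ?case using le by (simp add: ennreal_leI)
    qed
  qed
  also have "\<dots> = ennreal c * (\<Sum>k\<in>K. ennreal (w k) * (\<integral>\<^sup>+\<omega>. ennreal (a k \<omega> powr q) \<partial>M))"
  proof -
    have "(\<integral>\<^sup>+\<omega>. ennreal c * (\<Sum>k\<in>K. ennreal (w k) * ennreal (a k \<omega> powr q)) \<partial>M)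
        = ennreal c * (\<integral>\<^sup>+\<omega>. (\<Sum>k\<in>K. ennreal (w k) * ennreal (a k \<omega> powr q)) \<partial>M)"
      by (rule nn_integral_cmult) (use meas in measurable)
    also have "(\<integral>\<^sup>+\<omega>. (\<Sum>k\<in>K. ennreal (w k) * ennreal (a k \<omega> powr q)) \<partial>M)
        = (\<Sum>k\<in>K. (\<integral>\<^sup>+\<omega>. ennreal (w k) * ennreal (a k \<omega> powr q) \<partial>M))"
      by (rule nn_integral_sum) (use meas in measurable)
    also have "\<dots> = (\<Sum>k\<in>K. ennreal (w k) * (\<integral>\<^sup>+\<omega>. ennreal (a k \<omega> powr q) \<partial>M))"
      by (intro sum.cong refl nn_integral_cmult) (use meas in measurable)
    finally show ?thesis by simp
  qed
  also have "\<dots> \<le> ennreal c * (\<Sum>k\<in>K. ennreal (w k) * ennreal (s k powr q))"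
    by (intro mult_left_mono sum_mono bnd) auto
  also have "(\<Sum>k\<in>K. ennreal (w k) * ennreal (s k powr q)) = ennreal S"
  proof -
    have e: "w k * s k powr q = s k" for k
    proof (cases "s k = 0")
      case True then show ?thesis unfolding w_def by simp
    next
      case False
      then have "s k > 0" using nn(2)[of k] by simp
      then show ?thesis unfolding w_def by (simp add: powr_add[symmetric])
    qed
    have "(\<Sum>k\<in>K. ennreal (w k) * ennreal (s k powr q)) = (\<Sum>k\<in>K. ennreal (s k))"
    proof (intro sum.cong refl)
      fix k assume "k \<in> K"
      have "ennreal (w k) * ennreal (s k powr q) = ennreal (w k * s k powr q)"
        unfolding w_def by (rule ennreal_mult[symmetric]) auto
      then show "ennreal (w k) * ennreal (s k powr q) = ennreal (s k)" using e[of k] by simp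
    qed
    also have "\<dots> = ennreal S" unfolding S_def by (rule sum_ennreal) (rule nn)
    finally show ?thesis .
  qed
  also have "ennreal c * ennreal S = ennreal (S powr q)"
  proof (cases "S = 0")
    case True then show ?thesis unfolding c_def using q by simp
  next
    case False
    then have Sp: "S > 0" using S0 by simp
    have "c * S = S powr q" unfolding c_def using Sp powr_add[of S "q-1" 1] by simp
    then show ?thesis using Sp by (simp add: ennreal_mult''[symmetric] c_def)
  qed
  finally show ?thesis unfolding S_def .
qed

lemma finite_int_bounded: "finite (F::int set) \<Longrightarrow> \<exists>N::nat. F \<subseteq> {- int N..int N}"
proof (induction F rule: finite_induct)
  case empty then show ?case by auto
next
  case (insert x F)
  then obtain N where N: "F \<subseteq> {- int N..int N}" by blast
  define N' where "N' = max N (nat \<bar>x\<bar>)"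
  have b: "int N \<le> int N'" "\<bar>x\<bar> \<le> int N'" unfolding N'_def by auto
  have "insert x F \<subseteq> {- int N'..int N'}"
  proof
    fix y assume "y \<in> insert x F"
    then show "y \<in> {- int N'..int N'}"
    proof
      assume "y = x" then show ?thesis using b(2) by (auto simp: abs_le_iff)
    next
      assume "y \<in> F" then show ?thesis using N b(1) by auto
    qed
  qed
  then show ?case by blast
qed

lemma infsum_pt_SUP:
  fixes a :: "int \<Rightarrow> real" and q :: real
  assumes q: "q \<ge> 1" and nn: "\<And>k. a k \<ge> 0"
  shows "ennreal ((\<Sum>\<^sub>\<infinity>k. a k) powr q) \<le> (SUP N. ennreal ((\<Sum>k\<in>{- int N..int N}. a k) powr q))"
proof (cases "a summable_on UNIV")
  case False
  then show ?thesis using q by (simp add: infsum_not_exists)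
next
  case True
  show ?thesis
  proof (cases "(SUP N. ennreal ((\<Sum>k\<in>{- int N..int N}. a k) powr q))" rule: ennreal_cases)
    case top then show ?thesis by (metis top_greatest)
  next
    case (real l)
    have u: "(\<Sum>k\<in>{- int N..int N}. a k) \<le> l powr (1/q)" for N
    proof -
      have "ennreal ((\<Sum>k\<in>{- int N..int N}. a k) powr q) \<le> (SUP N. ennreal ((\<Sum>k\<in>{- int N..int N}. a k) powr q))"
        by (rule SUP_upper) simp
      then have le: "(\<Sum>k\<in>{- int N..int N}. a k) powr q \<le> l" using real by (simp add: ennreal_le_iff)
      have s0: "0 \<le> (\<Sum>k\<in>{- int N..int N}. a k)" using nn by (simp add: sum_nonneg)
      have "(\<Sum>k\<in>{- int N..int N}. a k) = ((\<Sum>k\<in>{- int N..int N}. a k) powr q) powr (1/q)"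
        using s0 q by (simp add: powr_powr)
      also have "\<dots> \<le> l powr (1/q)" using le q by (intro powr_mono2) auto
      finally show ?thesis .
    qed
    have y: "(\<Sum>\<^sub>\<infinity>k. a k) \<le> l powr (1/q)"
    proof (rule infsum_le_finite_sums[OF True])
      fix F :: "int set" assume F: "finite F" "F \<subseteq> UNIV"
      obtain N where N: "F \<subseteq> {- int N..int N}" using finite_int_bounded[OF F(1)] by blast
      have "sum a F \<le> (\<Sum>k\<in>{- int N..int N}. a k)" using N nn by (intro sum_mono2) auto
      then show "sum a F \<le> l powr (1/q)" using u[of N] by simp
    qed
    have y0: "0 \<le> (\<Sum>\<^sub>\<infinity>k. a k)" using nn by (simp add: infsum_nonneg)
    have "(\<Sum>\<^sub>\<infinity>k. a k) powr q \<le> (l powr (1/q)) powr q" using y y0 q by (intro powr_mono2) auto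
    also have "\<dots> = l" using real q by (simp add: powr_powr)
    finally have "ennreal ((\<Sum>\<^sub>\<infinity>k. a k) powr q) \<le> ennreal l" by (rule ennreal_leI)
    then show ?thesis using real by simp
  qed
qed

lemma sum_le_infsum_nonneg:
  fixes s :: "'k \<Rightarrow> real"
  assumes "s summable_on UNIV" "\<And>k. s k \<ge> 0" "finite F"
  shows "sum s F \<le> (\<Sum>\<^sub>\<infinity>k. s k)"
proof -
  have "infsum s F \<le> infsum s UNIV"
    by (rule infsum_mono_neutral) (use assms in auto)
  then show ?thesis using assms(3) by simp
qed

lemma infsum_mink:
  fixes q :: real and a :: "int \<Rightarrow> 'a \<Rightarrow> real" and s :: "int \<Rightarrow> real"
  assumes q: "q \<ge> 1"
    and nn: "\<And>k \<omega>. a k \<omega> \<ge> 0" "\<And>k. s k \<ge> 0"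
    and meas: "\<And>k. a k \<in> borel_measurable M"
    and bnd: "\<And>k. (\<integral>\<^sup>+\<omega>. ennreal (a k \<omega> powr q) \<partial>M) \<le> ennreal (s k powr q)"
    and summ: "s summable_on UNIV"
  shows "(\<integral>\<^sup>+\<omega>. ennreal ((\<Sum>\<^sub>\<infinity>k. a k \<omega>) powr q) \<partial>M) \<le> ennreal ((\<Sum>\<^sub>\<infinity>k. s k) powr q)"
proof -
  define f where "f = (\<lambda>N \<omega>. ennreal ((\<Sum>k\<in>{- int N..int N}. a k \<omega>) powr q))"
  have inc: "incseq f"
  proof (rule incseq_SucI)
    fix N
    show "f N \<le> f (Suc N)" unfolding le_fun_def f_def
    proof
      fix \<omega>
      have "(\<Sum>k\<in>{- int N..int N}. a k \<omega>) \<le> (\<Sum>k\<in>{- int (Suc N)..int (Suc N)}. a k \<omega>)"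
        using nn by (intro sum_mono2) auto
      moreover have "0 \<le> (\<Sum>k\<in>{- int N..int N}. a k \<omega>)" using nn by (simp add: sum_nonneg)
      ultimately show "ennreal ((\<Sum>k\<in>{- int N..int N}. a k \<omega>) powr q)
          \<le> ennreal ((\<Sum>k\<in>{- int (Suc N)..int (Suc N)}. a k \<omega>) powr q)"
        using q by (intro ennreal_leI powr_mono2) auto
    qed
  qed
  have fm: "f N \<in> borel_measurable M" for N unfolding f_def using meas by measurable
  have "(\<integral>\<^sup>+\<omega>. ennreal ((\<Sum>\<^sub>\<infinity>k. a k \<omega>) powr q) \<partial>M) \<le> (\<integral>\<^sup>+\<omega>. (SUP N. f N \<omega>) \<partial>M)"
    unfolding f_def by (intro nn_integral_mono infsum_pt_SUP[OF q]) (use nn in auto)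
  also have "\<dots> = (SUP N. \<integral>\<^sup>+\<omega>. f N \<omega> \<partial>M)"
    by (rule nn_integral_monotone_convergence_SUP[OF inc fm])
  also have "\<dots> \<le> ennreal ((\<Sum>\<^sub>\<infinity>k. s k) powr q)"
  proof (rule SUP_least)
    fix N :: nat
    have "(\<integral>\<^sup>+\<omega>. f N \<omega> \<partial>M) \<le> ennreal ((\<Sum>k\<in>{- int N..int N}. s k) powr q)"
      unfolding f_def by (rule finite_mink[OF q _ nn meas bnd]) simp
    also have "\<dots> \<le> ennreal ((\<Sum>\<^sub>\<infinity>k. s k) powr q)"
      using sum_le_infsum_nonneg[OF summ nn(2), of "{- int N..int N}"] nn q
      by (intro ennreal_leI powr_mono2) (auto simp: sum_nonneg)
    finally show "(\<integral>\<^sup>+\<omega>. f N \<omega> \<partial>M) \<le> ennreal ((\<Sum>\<^sub>\<infinity>k. s k) powr q)" .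
  qed
  finally show ?thesis .
qed

lemma lam_ge:
  assumes eta: "\<eta> > 0"
  shows "lam \<eta> k \<ge> (real_of_int k)^4" "lam \<eta> k > 0"
proof -
  define x where "x = (real_of_int k)^2"
  define P where "P = pi^2"
  have "3*3 \<le> pi*pi" by (rule mult_mono) (use pi_gt3 in auto)
  then have P9: "P \<ge> 9" unfolding P_def by (simp add: power2_eq_square)
  have x0: "x \<ge> 0" unfolding x_def by simp
  have lamx: "lam \<eta> k = 16 * x^2 * P^2 - 4 * x * P + \<eta>"
    unfolding lam_def x_def P_def by (simp add: power_mult_distrib power2_eq_square power4_eq_xxxx)
  have k4: "(real_of_int k)^4 = x^2" unfolding x_def by (simp add: power_mult[symmetric])
  have main: "16 * x^2 * P^2 - 4 * x * P \<ge> x^2"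
  proof (cases "k = 0")
    case True then show ?thesis unfolding x_def by simp
  next
    case False
    then have "\<bar>k\<bar> \<ge> 1" by simp
    then have "\<bar>real_of_int k\<bar> \<ge> 1" by linarith
    then have "\<bar>real_of_int k\<bar>^2 \<ge> 1" by (rule one_le_power)
    then have x1: "x \<ge> 1" unfolding x_def by simp
    have "4 * x * P \<le> 4 * x^2 * P" using x1 P9 by (intro mult_right_mono) (auto simp: power2_eq_square)
    moreover have "x^2 * (16 * P^2 - 4 * P - 1) \<ge> 0"
    proof -
      have "P * P \<ge> 9 * P" using P9 by (intro mult_right_mono) auto
      then have "16 * P^2 - 4 * P - 1 \<ge> 0" using P9 unfolding power2_eq_square by linarith
      then show ?thesis by simp
    qed
    ultimately show ?thesis by (simp add: algebra_simps)
  qed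
  show "lam \<eta> k \<ge> (real_of_int k)^4" unfolding lamx k4 using main eta by simp
  have "x^2 \<ge> 0" by simp
  then show "lam \<eta> k > 0" unfolding lamx using main eta by linarith
qed

lemma lam_neg: "lam \<eta> (-k) = lam \<eta> k"
  unfolding lam_def by simp

lemma lam_powr_le:
  assumes eta: "\<eta> > 0" and k: "k \<noteq> 0" and e: "e \<le> 0"
  shows "lam \<eta> k powr e \<le> \<bar>real_of_int k\<bar> powr (4*e)"
proof -
  have kp: "\<bar>real_of_int k\<bar> > 0" using k by simp
  have h4: "\<bar>real_of_int k\<bar> powr 4 = (real_of_int k) ^ 4"
    using powr_realpow[OF kp, of 4] by (simp add: power_abs)
  have "lam \<eta> k powr e \<le> (\<bar>real_of_int k\<bar> powr 4) powr e"
    unfolding h4 using lam_ge[OF eta, of k] kp e by (intro powr_mono2') auto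
  also have "\<dots> = \<bar>real_of_int k\<bar> powr (4*e)" by (rule powr_powr)
  finally show ?thesis .
qed

definition cl :: "real \<Rightarrow> real \<Rightarrow> (int \<Rightarrow> real) \<Rightarrow> (int \<Rightarrow> real) \<Rightarrow> int \<Rightarrow> real" where
  "cl \<eta> \<beta> b bt k = ((b k)^2 + (bt k)^2) * lam \<eta> k powr (\<beta> - 1)"

lemma cl_summable:
  assumes eta: "\<eta> > 0" and beta: "\<beta> \<le> 1"
    and bsum: "(\<lambda>m. ((b m)\<^sup>2 + (bt m)\<^sup>2) * \<bar>real_of_int m\<bar> powr (4*\<beta> - 4)) summable_on (UNIV - {0})"
  shows "cl \<eta> \<beta> b bt summable_on (UNIV - {0})"
proof (rule summable_on_comparison_test[OF bsum])
  fix k :: int assume "k \<in> UNIV - {0}"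
  then have k: "k \<noteq> 0" by simp
  have "lam \<eta> k powr (\<beta> - 1) \<le> \<bar>real_of_int k\<bar> powr (4*(\<beta> - 1))"
    by (rule lam_powr_le[OF eta k]) (use beta in simp)
  then show "cl \<eta> \<beta> b bt k \<le> ((b k)\<^sup>2 + (bt k)\<^sup>2) * \<bar>real_of_int k\<bar> powr (4*\<beta> - 4)"
    unfolding cl_def by (intro mult_left_mono) (auto simp: algebra_simps)
  show "0 \<le> cl \<eta> \<beta> b bt k" unfolding cl_def by simp
qed

lemma HS_bound:
  assumes eta: "\<eta> > 0" and beta: "\<beta> \<le> 1"
    and bsum: "(\<lambda>m. ((b m)\<^sup>2 + (bt m)\<^sup>2) * \<bar>real_of_int m\<bar> powr (4*\<beta> - 4)) summable_on (UNIV - {0})"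
  shows "infsum (cl \<eta> \<beta> b bt) (UNIV - {0}) \<le> (HS_norm_B \<eta> ((\<beta> - 1)/2) b bt)^2"
proof -
  define U0 :: "int set" where "U0 = UNIV - {0}"
  define f where "f = (\<lambda>j k. lam \<eta> k powr (\<beta> - 1) * (Bmat b bt k j)^2)"
  define inner where "inner = (\<lambda>j. infsum (f j) UNIV)"
  define A where "A = (\<lambda>k. lam \<eta> k powr (\<beta> - 1) * (b k)^2)"
  define Bt where "Bt = (\<lambda>k. lam \<eta> k powr (\<beta> - 1) * (bt k)^2)"
  have clAB: "cl \<eta> \<beta> b bt k = A k + Bt k" for k unfolding cl_def A_def Bt_def by (simp add: algebra_simps)
  have inner0: "inner j \<ge> 0" for j unfolding inner_def f_def by (intro infsum_nonneg) simp
  have innerj: "inner j = A j + Bt (-j)" if "j \<noteq> 0" for j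
  proof -
    have "inner j = infsum (f j) {j, -j}"
      unfolding inner_def
    proof (rule infsum_cong_neutral)
      fix k assume "k \<in> UNIV - {j, -j}"
      then show "f j k = 0" unfolding f_def Bmat_def by auto
    qed auto
    also have "\<dots> = f j j + f j (-j)" using that by simp
    also have "\<dots> = A j + Bt (-j)" unfolding f_def Bmat_def A_def Bt_def using that by (simp add: lam_neg)
    finally show ?thesis .
  qed
  have clsum: "cl \<eta> \<beta> b bt summable_on U0" unfolding U0_def by (rule cl_summable[OF eta beta bsum])
  have Asum: "A summable_on U0"
    by (rule summable_on_comparison_test[OF clsum]) (auto simp: clAB A_def Bt_def)
  have Btsum: "Bt summable_on U0"
    by (rule summable_on_comparison_test[OF clsum]) (auto simp: clAB A_def Bt_def)
  have bij: "bij_betw uminus U0 U0" unfolding U0_def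
    by (rule bij_betwI[where g=uminus]) auto
  have Btm_sum: "(\<lambda>k. Bt (-k)) summable_on U0"
    using summable_on_reindex_bij_betw[OF bij, of Bt] Btsum by simp
  have Btm_eq: "infsum (\<lambda>k. Bt (-k)) U0 = infsum Bt U0"
    by (rule infsum_reindex_bij_betw[OF bij])
  have "infsum (cl \<eta> \<beta> b bt) U0 = infsum A U0 + infsum Bt U0"
    unfolding clAB by (rule infsum_add[OF Asum Btsum])
  also have "\<dots> = infsum A U0 + infsum (\<lambda>k. Bt (-k)) U0" by (simp add: Btm_eq)
  also have "\<dots> = infsum (\<lambda>k. A k + Bt (-k)) U0"
    by (rule infsum_add[symmetric, OF Asum Btm_sum])
  also have "\<dots> = infsum inner U0"
    by (rule infsum_cong) (use innerj in \<open>auto simp: U0_def\<close>)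
  finally have e1: "infsum (cl \<eta> \<beta> b bt) U0 = infsum inner U0" .
  have isum0: "inner summable_on U0"
  proof -
    have "(\<lambda>k. A k + Bt (-k)) summable_on U0" by (rule summable_on_add[OF Asum Btm_sum])
    then show ?thesis by (rule summable_on_cong[THEN iffD1, rotated]) (use innerj in \<open>auto simp: U0_def\<close>)
  qed
  have isum: "inner summable_on UNIV"
  proof -
    have "UNIV = insert 0 U0" unfolding U0_def by auto
    then show ?thesis using isum0 summable_on_insert_iff by metis
  qed
  have "infsum inner U0 \<le> infsum inner UNIV"
    by (rule infsum_mono_neutral[OF isum0 isum]) (auto simp: inner0)
  also have "infsum inner UNIV = (HS_norm_B \<eta> ((\<beta> - 1)/2) b bt)^2"
  proof -
    have e2: "2 * ((\<beta> - 1)/2) = \<beta> - 1" by simp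
    show ?thesis unfolding HS_norm_B_def inner_def f_def e2 using inner0[unfolded inner_def f_def]
    by (simp add: infsum_nonneg)
  qed
  finally show ?thesis using e1 unfolding U0_def by simp
qed

lemma ebasis_meas: "ebasis k \<in> borel_measurable lborel"
  unfolding ebasis_def[abs_def] by measurable

lemma ebasis_bound: "\<bar>ebasis k x\<bar> \<le> sqrt 2"
proof -
  have s: "1 \<le> sqrt (2::real)" by simp
  show ?thesis unfolding ebasis_def
    using s abs_cos_le_one abs_sin_le_one
    by (auto simp: abs_mult intro: mult_left_le order_trans[OF _ s])
qed

lemma abs_le_1_plus_sq: "\<bar>v::real\<bar> \<le> 1 + v^2"
proof (cases "\<bar>v\<bar> \<le> 1")
  case True then show ?thesis by (simp add: add_increasing2)
next
  case False
  then have "\<bar>v\<bar> * 1 \<le> \<bar>v\<bar> * \<bar>v\<bar>" by (intro mult_left_mono) auto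
  then show ?thesis by (simp add: power2_eq_square abs_mult_self_eq)
qed

lemma inH_coef_integrable:
  assumes v: "inH v"
  shows "set_integrable lborel {0<..<1} (\<lambda>x. ebasis k x * v x)"
proof -
  define A :: "real set" where "A = {0<..<1}"
  have vm: "(\<lambda>x. indicator A x *\<^sub>R v x) \<in> borel_measurable lborel"
    using v unfolding inH_def set_borel_measurable_def A_def by auto
  have vi: "integrable lborel (\<lambda>x. indicator A x *\<^sub>R (v x)^2)"
    using v unfolding inH_def set_integrable_def A_def by auto
  have ii: "integrable lborel (indicator A :: real \<Rightarrow> real)"
    unfolding A_def by (intro integrable_real_indicator) auto
  have hi: "integrable lborel (\<lambda>x. sqrt 2 * (indicator A x + indicator A x *\<^sub>R (v x)^2))"
    by (rule integrable_mult_right, rule Bochner_Integration.integrable_add[OF ii vi])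
  show ?thesis unfolding set_integrable_def A_def[symmetric]
  proof (rule Bochner_Integration.integrable_bound[OF hi])
    have "(\<lambda>x. ebasis k x * (indicator A x *\<^sub>R v x)) \<in> borel_measurable lborel"
      using ebasis_meas vm by measurable
    then show "(\<lambda>x. indicator A x *\<^sub>R (ebasis k x * v x)) \<in> borel_measurable lborel"
      by (simp add: mult.left_commute)
    show "AE x in lborel. norm (indicator A x *\<^sub>R (ebasis k x * v x))
        \<le> norm (sqrt 2 * (indicator A x + indicator A x *\<^sub>R (v x)^2))"
    proof (rule AE_I2)
      fix x
      show "norm (indicator A x *\<^sub>R (ebasis k x * v x))
        \<le> norm (sqrt 2 * (indicator A x + indicator A x *\<^sub>R (v x)^2))"
      proof (cases "x \<in> A")
        case True
        have "\<bar>ebasis k x * v x\<bar> \<le> sqrt 2 * (1 + (v x)^2)"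
          unfolding abs_mult using ebasis_bound[of k x] abs_le_1_plus_sq[of "v x"]
          by (intro mult_mono) auto
        then show ?thesis using True by simp
      qed simp
    qed
  qed
qed

lemma coef_diff:
  assumes "inH f" "inH g"
  shows "coef k (\<lambda>x. f x - g x) = coef k f - coef k g"
proof -
  have "coef k (\<lambda>x. f x - g x) = (LINT x:{0<..<1}|lborel. ebasis k x * f x - ebasis k x * g x)"
    unfolding coef_def by (simp add: right_diff_distrib)
  also have "\<dots> = coef k f - coef k g"
    unfolding coef_def
    by (rule set_integral_diff(2)) (use inH_coef_integrable assms in auto)
  finally show ?thesis .
qed

lemma L2_unique:
  assumes Z1: "is_stoch_int_coord M W phi t Z1" and Z2: "is_stoch_int_coord M W phi t Z2"
  shows "AE \<omega> in M. Z1 \<omega> = Z2 \<omega>"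
proof -
  define S where "S = (\<lambda>N m. riemann_sum W phi t N m)"
  have m1: "Z1 \<in> borel_measurable M" and m2: "Z2 \<in> borel_measurable M"
    using Z1 Z2 unfolding is_stoch_int_coord_def by auto
  have i1: "integrable M (\<lambda>\<omega>. (Z1 \<omega> - S N m \<omega>)\<^sup>2)" and i2: "integrable M (\<lambda>\<omega>. (Z2 \<omega> - S N m \<omega>)\<^sup>2)" for N m
    using Z1 Z2 unfolding is_stoch_int_coord_def S_def by auto
  have l1: "((\<lambda>(N, m). LINT \<omega>|M. (Z1 \<omega> - S N m \<omega>)\<^sup>2) \<longlongrightarrow> 0) (sequentially \<times>\<^sub>F sequentially)"
    and l2: "((\<lambda>(N, m). LINT \<omega>|M. (Z2 \<omega> - S N m \<omega>)\<^sup>2) \<longlongrightarrow> 0) (sequentially \<times>\<^sub>F sequentially)"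
    using Z1 Z2 unfolding is_stoch_int_coord_def S_def by auto
  have pt: "(Z1 \<omega> - Z2 \<omega>)^2 \<le> 2 * (Z1 \<omega> - S N m \<omega>)\<^sup>2 + 2 * (Z2 \<omega> - S N m \<omega>)\<^sup>2" for \<omega> N m
  proof -
    have "0 \<le> (Z1 \<omega> + Z2 \<omega> - 2 * S N m \<omega>)^2" by simp
    then show ?thesis by (simp add: power2_eq_square algebra_simps)
  qed
  have hi2: "integrable M (\<lambda>\<omega>. 2 * (Z1 \<omega> - S 0 0 \<omega>)\<^sup>2 + 2 * (Z2 \<omega> - S 0 0 \<omega>)\<^sup>2)"
    by (rule Bochner_Integration.integrable_add; rule integrable_mult_right; rule i1 i2)
  have int: "integrable M (\<lambda>\<omega>. (Z1 \<omega> - Z2 \<omega>)^2)"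
  proof (rule Bochner_Integration.integrable_bound[OF hi2])
    show "(\<lambda>\<omega>. (Z1 \<omega> - Z2 \<omega>)^2) \<in> borel_measurable M" using m1 m2 by measurable
    show "AE \<omega> in M. norm ((Z1 \<omega> - Z2 \<omega>)^2) \<le> norm (2 * (Z1 \<omega> - S 0 0 \<omega>)\<^sup>2 + 2 * (Z2 \<omega> - S 0 0 \<omega>)\<^sup>2)"
      using pt by (intro AE_I2) (simp add: add_nonneg_nonneg)
  qed
  have le: "(LINT \<omega>|M. (Z1 \<omega> - Z2 \<omega>)^2) \<le> 2 * (LINT \<omega>|M. (Z1 \<omega> - S N m \<omega>)\<^sup>2) + 2 * (LINT \<omega>|M. (Z2 \<omega> - S N m \<omega>)\<^sup>2)" for N m
  proof -
    have "(LINT \<omega>|M. (Z1 \<omega> - Z2 \<omega>)^2) \<le> (LINT \<omega>|M. 2 * (Z1 \<omega> - S N m \<omega>)\<^sup>2 + 2 * (Z2 \<omega> - S N m \<omega>)\<^sup>2)"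
      using int i1 i2 pt by (intro integral_mono) auto
    also have "\<dots> = 2 * (LINT \<omega>|M. (Z1 \<omega> - S N m \<omega>)\<^sup>2) + 2 * (LINT \<omega>|M. (Z2 \<omega> - S N m \<omega>)\<^sup>2)"
      using i1 i2 by simp
    finally show ?thesis .
  qed
  have lim: "((\<lambda>(N, m). 2 * (LINT \<omega>|M. (Z1 \<omega> - S N m \<omega>)\<^sup>2) + 2 * (LINT \<omega>|M. (Z2 \<omega> - S N m \<omega>)\<^sup>2)) \<longlongrightarrow> 2 * 0 + 2 * 0)
        (sequentially \<times>\<^sub>F sequentially)"
    using tendsto_add[OF tendsto_mult_left[OF l1, of 2] tendsto_mult_left[OF l2, of 2]]
    by (simp add: case_prod_unfold)
  have "(LINT \<omega>|M. (Z1 \<omega> - Z2 \<omega>)^2) \<le> 2 * 0 + 2 * 0"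
  proof (rule tendsto_lowerbound[OF lim])
    show "\<forall>\<^sub>F x in sequentially \<times>\<^sub>F sequentially.
        (LINT \<omega>|M. (Z1 \<omega> - Z2 \<omega>)^2) \<le> (case x of (N, m) \<Rightarrow> 2 * (LINT \<omega>|M. (Z1 \<omega> - S N m \<omega>)\<^sup>2) + 2 * (LINT \<omega>|M. (Z2 \<omega> - S N m \<omega>)\<^sup>2))"
      using le by (intro always_eventually) (auto split: prod.splits)
  qed (simp add: prod_filter_eq_bot)
  then have "(LINT \<omega>|M. (Z1 \<omega> - Z2 \<omega>)^2) = 0"
  proof -
    have "0 \<le> (LINT \<omega>|M. (Z1 \<omega> - Z2 \<omega>)^2)" by (rule integral_nonneg_AE) simp
    then show ?thesis using \<open>(LINT \<omega>|M. (Z1 \<omega> - Z2 \<omega>)^2) \<le> 2 * 0 + 2 * 0\<close> by linarith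
  qed
  then have "AE \<omega> in M. (Z1 \<omega> - Z2 \<omega>)^2 = 0"
    using integral_nonneg_eq_0_iff_AE[OF int] by simp
  then show ?thesis by eventually_elim simp
qed

definition Vk :: "real \<Rightarrow> (int \<Rightarrow> real) \<Rightarrow> (int \<Rightarrow> real) \<Rightarrow> real \<Rightarrow> int \<Rightarrow> real" where
  "Vk \<eta> b bt t k = ((b k)^2 + (bt k)^2) * ((1 - exp (-2 * lam \<eta> k * t)) / (2 * lam \<eta> k))"

lemma var_bound:
  assumes eta: "\<eta> > 0" and k: "k \<noteq> 0" and t: "t \<ge> 0"
  shows "(\<Sum>i<N. \<Sum>j\<in>{- int m..int m}. ((\<lambda>s j. exp (- lam \<eta> k * (t - s)) * Bmat b bt k j) (real i * t / real N) j)^2 * (t / real N))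
     \<le> Vk \<eta> b bt t k"
proof -
  define l where "l = lam \<eta> k"
  have lp: "l > 0" unfolding l_def using lam_ge[OF eta] by simp
  define e where "e = (\<lambda>i::nat. exp (-2*l*(t - real i * t / real N)) * (t / real N))"
  define c where "c = (b k)^2 + (bt k)^2"
  have e0: "e i \<ge> 0" for i unfolding e_def using t by simp
  have sq: "(exp (- l * (t - s)) * B)^2 * h = exp (-2*l*(t - s)) * h * B^2" for s B h :: real
  proof -
    have "(exp (- l * (t - s)))^2 = exp (-2*l*(t - s))"
      by (simp add: power2_eq_square exp_add[symmetric])
    then show ?thesis by (simp add: power_mult_distrib)
  qed
  have "(\<Sum>i<N. \<Sum>j\<in>{- int m..int m}. ((\<lambda>s j. exp (- lam \<eta> k * (t - s)) * Bmat b bt k j) (real i * t / real N) j)^2 * (t / real N))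
      = (\<Sum>i<N. e i * (\<Sum>j\<in>{- int m..int m}. (Bmat b bt k j)^2))"
    unfolding e_def l_def[symmetric] sq by (simp add: sum_distrib_left)
  also have "\<dots> \<le> (\<Sum>i<N. e i * c)"
    unfolding c_def by (intro sum_mono mult_left_mono Bmat_sq_sum k e0) simp
  also have "\<dots> = c * (\<Sum>i<N. e i)" by (simp add: sum_distrib_left mult.commute)
  also have "\<dots> \<le> c * ((1 - exp (-2*l*t)) / (2*l))"
    unfolding e_def c_def by (intro mult_left_mono geom_bound lp t) simp
  also have "\<dots> = Vk \<eta> b bt t k" unfolding Vk_def c_def l_def by simp
  finally show ?thesis .
qed

lemma coef_moment:
  assumes P: "prob_space M" and filt: "normal_filtration M T F" and wiener: "cyl_wiener M T F W"
    and t: "t \<in> {0..T}" and p: "p \<ge> 2" and eta: "\<eta> > 0" and k: "k \<noteq> 0"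
    and Z: "is_stoch_int_coord M W (\<lambda>s j. exp (- lam \<eta> k * (t - s)) * Bmat b bt k j) t Z"
  shows "(\<integral>\<^sup>+\<omega>. ennreal ((lam \<eta> k powr (2*\<rho>) * (Z \<omega>)^2) powr (p/2)) \<partial>M)
     \<le> ennreal ((p*(p-1)/2 * lam \<eta> k powr (2*\<rho>) * Vk \<eta> b bt t k) powr (p/2))"
proof -
  define L where "L = lam \<eta> k powr (2*\<rho>)"
  have Lp: "L > 0" unfolding L_def using lam_ge(2)[OF eta, of k] by simp
  define V where "V = Vk \<eta> b bt t k"
  define x where "x = p*(p-1)/2"
  have x0: "x \<ge> 0" unfolding x_def using p by simp
  have V0: "V \<ge> 0" unfolding V_def Vk_def using lam_ge[OF eta, of k] t by (simp add: divide_nonneg_pos)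
  have mom: "(\<integral>\<^sup>+\<omega>. ennreal (\<bar>Z \<omega>\<bar> powr p) \<partial>M) \<le> ennreal (x powr (p/2) * V powr (p/2))"
    unfolding x_def V_def
    by (rule stoch_int_moment[OF P filt wiener t p Z]) (rule var_bound[OF eta k], use t in simp)
  have pt: "(L * (Z \<omega>)^2) powr (p/2) = L powr (p/2) * \<bar>Z \<omega>\<bar> powr p" for \<omega>
  proof -
    have "(L * (Z \<omega>)^2) powr (p/2) = L powr (p/2) * ((Z \<omega>)^2) powr (p/2)"
      using Lp by (simp add: powr_mult)
    also have "((Z \<omega>)^2) powr (p/2) = \<bar>Z \<omega>\<bar> powr p"
    proof -
      have "((Z \<omega>)^2) = \<bar>Z \<omega>\<bar> ^ 2" by simp
      also have "\<dots> = \<bar>Z \<omega>\<bar> powr 2"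
        by (cases "Z \<omega> = 0") (simp_all add: powr_realpow)
      finally have "((Z \<omega>)^2) powr (p/2) = (\<bar>Z \<omega>\<bar> powr 2) powr (p/2)" by simp
      also have "\<dots> = \<bar>Z \<omega>\<bar> powr (2 * (p/2))" by (rule powr_powr)
      also have "\<dots> = \<bar>Z \<omega>\<bar> powr p" by simp
      finally show ?thesis .
    qed
    finally show ?thesis .
  qed
  have "(\<integral>\<^sup>+\<omega>. ennreal ((L * (Z \<omega>)^2) powr (p/2)) \<partial>M)
      = (\<integral>\<^sup>+\<omega>. ennreal (L powr (p/2)) * ennreal (\<bar>Z \<omega>\<bar> powr p) \<partial>M)"
    unfolding pt by (intro nn_integral_cong) (simp add: ennreal_mult)
  also have "\<dots> = ennreal (L powr (p/2)) * (\<integral>\<^sup>+\<omega>. ennreal (\<bar>Z \<omega>\<bar> powr p) \<partial>M)"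
  proof (rule nn_integral_cmult)
    have "Z \<in> borel_measurable M" using Z unfolding is_stoch_int_coord_def by auto
    then show "(\<lambda>\<omega>. ennreal (\<bar>Z \<omega>\<bar> powr p)) \<in> borel_measurable M" by measurable
  qed
  also have "\<dots> \<le> ennreal (L powr (p/2)) * ennreal (x powr (p/2) * V powr (p/2))"
    by (intro mult_left_mono mom) simp
  also have "\<dots> = ennreal ((x * L * V) powr (p/2))"
    using Lp x0 V0 by (simp add: ennreal_mult[symmetric] powr_mult mult_ac)
  finally show ?thesis unfolding L_def x_def V_def by (simp add: mult_ac)
qed

theorem lemma5p9:
  fixes \<beta> T \<eta> \<kappa> \<rho> chi p \<epsilon> :: real
    and b bt :: "int \<Rightarrow> real"
    and \<xi> :: "real \<Rightarrow> real"
    and M :: "'a measure"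
    and F :: "real \<Rightarrow> 'a set set"
    and W :: "int \<Rightarrow> real \<Rightarrow> 'a \<Rightarrow> real"
    and h :: "nat \<Rightarrow> real"
    and X On :: "nat \<Rightarrow> real \<Rightarrow> 'a \<Rightarrow> real \<Rightarrow> real"
    and Oproc :: "real \<Rightarrow> 'a \<Rightarrow> real \<Rightarrow> real"
    and n :: nat
  assumes beta: "1/8 < \<beta>" "\<beta> < 1/2"
    and T: "0 < T" and eta: "0 < \<eta>"
    and rho: "1/16 < \<rho>" "\<rho> < \<beta>/2"
    and chi: "0 < chi" "chi \<le> \<rho>/2 - 1/32"
    and bsum: "(\<lambda>m. ((b m)\<^sup>2 + (bt m)\<^sup>2) * \<bar>real_of_int m\<bar> powr (4*\<beta> - 4)) summable_on (UNIV - {0})"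
    and xi: "inHr \<eta> (1/4) \<xi>"
    and P: "prob_space M"
    and filt: "normal_filtration M T F"
    and wiener: "cyl_wiener M T F W"
    and h_pos: "\<And>m. m \<ge> 1 \<Longrightarrow> 0 < h m"
    and h_lim: "limsup (\<lambda>m. ereal (h m)) = 0"
    and X_proc: "\<And>m t. m \<ge> 1 \<Longrightarrow> t \<in> {0..T} \<Longrightarrow>
         (\<forall>\<omega>\<in>space M. inPnH m (X m t \<omega>) \<and> inPnH m (On m t \<omega>)) \<and>
         (\<forall>k. (\<lambda>\<omega>. coef k (X m t \<omega>)) \<in> borel_measurable M \<and>
              (\<lambda>\<omega>. coef k (On m t \<omega>)) \<in> borel_measurable M)"
    and On_eq: "\<And>m t k. m \<ge> 1 \<Longrightarrow> t \<in> {0..T} \<Longrightarrow>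
         \<exists>Z. is_stoch_int_coord M W
               (\<lambda>s j. if \<bar>k\<bar> \<le> int m then exp (- lam \<eta> k * (t - s)) * Bmat b bt k j else 0) t Z
             \<and> (AE \<omega> in M. coef k (On m t \<omega>) = Z \<omega>)"
    and X_eq: "\<And>m t. m \<ge> 1 \<Longrightarrow> t \<in> {0..T} \<Longrightarrow>
         AE \<omega> in M. \<forall>k.
           (let g = (\<lambda>s. exp (- lam \<eta> k * (t - s)) *
                 (if Hr_norm \<eta> \<rho> (X m (grid_floor (h m) s) \<omega>)
                     + Hr_norm \<eta> \<rho> (\<lambda>x. On m (grid_floor (h m) s) \<omega> x
                                        + Pn_semigroup \<eta> m (grid_floor (h m) s) \<xi> x)
                     \<le> \<bar>h m\<bar> powr (- chi) then 1 else 0) *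
                 F_coef \<eta> \<kappa> k (X m (grid_floor (h m) s) \<omega>))
            in (\<bar>k\<bar> \<le> int m \<longrightarrow> set_integrable lborel {0..t} g) \<and>
               coef k (X m t \<omega>) =
                 (if \<bar>k\<bar> \<le> int m
                  then exp (- lam \<eta> k * t) * coef k \<xi> + (LINT s:{0..t}|lborel. g s)
                       + coef k (On m t \<omega>)
                  else 0))"
    and p: "2 \<le> p"
    and n: "1 \<le> n"
    and eps: "0 \<le> \<epsilon>" "\<epsilon> < \<beta>/2 - \<rho>"
    and O_proc: "\<And>t. t \<in> {0..T} \<Longrightarrow>
         (\<forall>\<omega>\<in>space M. inHr \<eta> \<rho> (Oproc t \<omega>)) \<and>
         (\<forall>k. (\<lambda>\<omega>. coef k (Oproc t \<omega>)) \<in> borel_measurable M)"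
    and O_eq: "\<And>t k. t \<in> {0..T} \<Longrightarrow>
         \<exists>Z. is_stoch_int_coord M W (\<lambda>s j. exp (- lam \<eta> k * (t - s)) * Bmat b bt k j) t Z
             \<and> (AE \<omega> in M. coef k (Oproc t \<omega>) = Z \<omega>)"
  shows "(SUP t\<in>{0..T}. Lp_norm M p \<eta> \<rho> (\<lambda>\<omega> x. Oproc t \<omega> x - On n t \<omega> x))
           \<le> ennreal (sqrt (p * (p - 1) * T powr (\<beta> - 2*\<rho> - 2*\<epsilon>) / (2 * (\<beta> - 2*\<rho> - 2*\<epsilon>)))
                      * HS_norm_B \<eta> ((\<beta> - 1)/2) b bt * real n powr (- 4*\<epsilon>))"
proof -
  interpret prob_space M by (rule P)
  define \<gamma> where "\<gamma> = \<beta> - 2*\<rho> - 2*\<epsilon>"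
  have g: "0 < \<gamma>" "\<gamma> < 1" using eps rho beta unfolding \<gamma>_def by auto
  define x where "x = p*(p-1)/2"
  have x0: "x \<ge> 0" using p unfolding x_def by simp
  define C where "C = x * ((real n powr (-4*\<epsilon>))^2 * (T powr \<gamma> / \<gamma>))"
  have C0: "C \<ge> 0" unfolding C_def using x0 g by simp
  define HS where "HS = HS_norm_B \<eta> ((\<beta> - 1)/2) b bt"
  have HS0: "HS \<ge> 0" unfolding HS_def HS_norm_B_def
    by (intro real_sqrt_ge_zero infsum_nonneg mult_nonneg_nonneg) auto
  have beta1: "\<beta> \<le> 1" using beta by simp
  have clb: "infsum (cl \<eta> \<beta> b bt) (UNIV - {0}) \<le> HS^2"
    unfolding HS_def by (rule HS_bound[OF eta beta1 bsum])
  have clsum: "cl \<eta> \<beta> b bt summable_on (UNIV - {0})" by (rule cl_summable[OF eta beta1 bsum])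
  have cl0: "cl \<eta> \<beta> b bt k \<ge> 0" for k unfolding cl_def by simp
  have RHS_eq: "sqrt (p * (p - 1) * T powr (\<beta> - 2*\<rho> - 2*\<epsilon>) / (2 * (\<beta> - 2*\<rho> - 2*\<epsilon>)))
      * HS_norm_B \<eta> ((\<beta> - 1)/2) b bt * real n powr (- 4*\<epsilon>) = sqrt (C * HS^2)"
  proof -
    have "C * HS^2 = (x * (T powr \<gamma> / \<gamma>)) * (real n powr (-4*\<epsilon>) * HS)^2"
      unfolding C_def by (simp add: power_mult_distrib mult_ac)
    then have "sqrt (C * HS^2) = sqrt ((x * (T powr \<gamma> / \<gamma>)) * (real n powr (-4*\<epsilon>) * HS)^2)"
      by (rule arg_cong)
    also have "\<dots> = sqrt (x * (T powr \<gamma> / \<gamma>)) * sqrt ((real n powr (-4*\<epsilon>) * HS)^2)"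
      by (rule real_sqrt_mult)
    also have "sqrt ((real n powr (-4*\<epsilon>) * HS)^2) = real n powr (-4*\<epsilon>) * HS"
      using HS0 by simp
    finally have "sqrt (C * HS^2) = sqrt (x * (T powr \<gamma> / \<gamma>)) * (real n powr (-4*\<epsilon>) * HS)" .
    moreover have "x * (T powr \<gamma> / \<gamma>) = p * (p - 1) * T powr (\<beta> - 2*\<rho> - 2*\<epsilon>) / (2 * (\<beta> - 2*\<rho> - 2*\<epsilon>))"
      unfolding x_def \<gamma>_def by simp
    ultimately show ?thesis unfolding HS_def by (simp add: mult_ac)
  qed
  show ?thesis
  proof (rule SUP_least)
    fix t assume t: "t \<in> {0..T}"
    define phi where "phi = (\<lambda>k s j. exp (- lam \<eta> k * (t - s)) * Bmat b bt k j)"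
    have "\<forall>k. \<exists>Z. is_stoch_int_coord M W (phi k) t Z \<and> (AE \<omega> in M. coef k (Oproc t \<omega>) = Z \<omega>)"
      using O_eq[OF t] unfolding phi_def by blast
    then obtain ZO where ZO1: "\<And>k. is_stoch_int_coord M W (phi k) t (ZO k)"
      and ZO2: "\<And>k. AE \<omega> in M. coef k (Oproc t \<omega>) = ZO k \<omega>"
      by metis
    define d where "d = (\<lambda>k \<omega>. if \<bar>k\<bar> > int n then ZO k \<omega> else 0)"
    define a where "a = (\<lambda>k \<omega>. lam \<eta> k powr (2*\<rho>) * (d k \<omega>)^2)"
    define s where "s = (\<lambda>k. if \<bar>k\<bar> > int n then x * lam \<eta> k powr (2*\<rho>) * Vk \<eta> b bt t k else 0)"
    have AEid: "AE \<omega> in M. \<forall>k. coef k (\<lambda>xa. Oproc t \<omega> xa - On n t \<omega> xa) = d k \<omega>"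
    proof (subst AE_all_countable, intro allI)
      fix k
      have spc: "AE \<omega> in M. coef k (\<lambda>xa. Oproc t \<omega> xa - On n t \<omega> xa) = coef k (Oproc t \<omega>) - coef k (On n t \<omega>)"
        using AE_space
      proof eventually_elim
        case (elim \<omega>)
        have "inH (Oproc t \<omega>)" using O_proc[OF t] elim unfolding inHr_def by auto
        moreover have "inH (On n t \<omega>)" using X_proc[OF n t] elim unfolding inPnH_def by auto
        ultimately show ?case by (rule coef_diff)
      qed
      show "AE \<omega> in M. coef k (\<lambda>xa. Oproc t \<omega> xa - On n t \<omega> xa) = d k \<omega>"
      proof (cases "\<bar>k\<bar> > int n")
        case True
        have z: "AE \<omega> in M. coef k (On n t \<omega>) = 0" using AE_space
        proof eventually_elim
          case (elim \<omega>)
          then show ?case using X_proc[OF n t] True unfolding inPnH_def by auto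
        qed
        show ?thesis using spc z ZO2[of k] by eventually_elim (simp add: d_def True)
      next
        case False
        then have kn: "\<bar>k\<bar> \<le> int n" by simp
        obtain Z' where Z'1: "is_stoch_int_coord M W (\<lambda>s j. if \<bar>k\<bar> \<le> int n then exp (- lam \<eta> k * (t - s)) * Bmat b bt k j else 0) t Z'"
          and Z'2: "AE \<omega> in M. coef k (On n t \<omega>) = Z' \<omega>"
          using On_eq[OF n t, of k] by blast
        have Z'': "is_stoch_int_coord M W (phi k) t Z'" using Z'1 kn unfolding phi_def by simp
        have "AE \<omega> in M. ZO k \<omega> = Z' \<omega>" by (rule L2_unique[OF ZO1 Z''])
        then show ?thesis using spc Z'2 ZO2[of k] by eventually_elim (simp add: d_def False)
      qed
    qed
    have meas: "a k \<in> borel_measurable M" for k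
    proof -
      have zm: "ZO k \<in> borel_measurable M" using ZO1[of k] unfolding is_stoch_int_coord_def by auto
      show ?thesis
      proof (cases "\<bar>k\<bar> > int n")
        case True then show ?thesis unfolding a_def d_def using zm by simp measurable
      next
        case False then show ?thesis unfolding a_def d_def by simp
      qed
    qed
    have a0: "a k \<omega> \<ge> 0" for k \<omega> unfolding a_def by simp
    have Vk0: "Vk \<eta> b bt t k \<ge> 0" for k
      unfolding Vk_def using lam_ge(2)[OF eta, of k] t by (simp add: divide_nonneg_pos)
    have s0: "s k \<ge> 0" for k unfolding s_def using x0 Vk0 by simp
    have p2: "p/2 \<ge> 1" using p by simp
    have bnd: "(\<integral>\<^sup>+\<omega>. ennreal (a k \<omega> powr (p/2)) \<partial>M) \<le> ennreal (s k powr (p/2))" for k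
    proof (cases "\<bar>k\<bar> > int n")
      case True
      then have k0: "k \<noteq> 0" by auto
      have "(\<integral>\<^sup>+\<omega>. ennreal ((lam \<eta> k powr (2*\<rho>) * (ZO k \<omega>)^2) powr (p/2)) \<partial>M)
          \<le> ennreal ((p*(p-1)/2 * lam \<eta> k powr (2*\<rho>) * Vk \<eta> b bt t k) powr (p/2))"
        by (rule coef_moment[OF P filt wiener t p eta k0 ZO1[of k, unfolded phi_def]])
      then show ?thesis unfolding a_def d_def s_def x_def using True by simp
    next
      case False
      then show ?thesis unfolding a_def d_def s_def using p by simp
    qed
    have s_le: "s k \<le> C * cl \<eta> \<beta> b bt k" for k
    proof (cases "\<bar>k\<bar> > int n")
      case True
      have lamn: "lam \<eta> k \<ge> real n ^ 4"
      proof -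
        have "real n ^ 4 \<le> \<bar>real_of_int k\<bar> ^ 4" using True by (intro power_mono) auto
        also have "\<dots> = (real_of_int k)^4" by (simp add: power_abs)
        also have "\<dots> \<le> lam \<eta> k" by (rule lam_ge(1)[OF eta])
        finally show ?thesis .
      qed
      have t0: "0 \<le> t" "t \<le> T" using t by auto
      have key: "lam \<eta> k powr (2*\<rho>) * ((1 - exp (-2*lam \<eta> k*t)) / (2*lam \<eta> k))
          \<le> lam \<eta> k powr (\<beta> - 1) * (real n powr (-4*\<epsilon>))^2 * (T powr \<gamma> / \<gamma>)"
        by (rule key_ineq[OF lamn n t0 g \<gamma>_def eps(1)])
      have "s k = x * ((b k)^2 + (bt k)^2) * (lam \<eta> k powr (2*\<rho>) * ((1 - exp (-2*lam \<eta> k*t)) / (2*lam \<eta> k)))"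
        unfolding s_def Vk_def using True by (simp add: mult_ac)
      also have "\<dots> \<le> x * ((b k)^2 + (bt k)^2) * (lam \<eta> k powr (\<beta> - 1) * (real n powr (-4*\<epsilon>))^2 * (T powr \<gamma> / \<gamma>))"
        using key x0 by (intro mult_left_mono) auto
      also have "\<dots> = C * cl \<eta> \<beta> b bt k" unfolding C_def cl_def by (simp add: mult_ac)
      finally show ?thesis .
    next
      case False
      then show ?thesis unfolding s_def using C0 cl0 by simp
    qed
    have ssum0: "s summable_on (UNIV - {0})"
    proof (rule summable_on_comparison_test[OF summable_on_cmult_right[OF clsum, of C]])
      fix k :: int assume "k \<in> UNIV - {0}"
      show "s k \<le> C * cl \<eta> \<beta> b bt k" by (rule s_le)
      show "0 \<le> s k" by (rule s0)
    qed
    have ssum: "s summable_on UNIV"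
    proof -
      have "(UNIV :: int set) = insert 0 (UNIV - {0})" by auto
      then show ?thesis using ssum0 summable_on_insert_iff by metis
    qed
    have sinf: "infsum s UNIV \<le> C * HS^2"
    proof -
      have "infsum s UNIV = infsum s (UNIV - {0})"
        by (rule infsum_cong_neutral) (auto simp: s_def)
      also have "\<dots> \<le> infsum (\<lambda>k. C * cl \<eta> \<beta> b bt k) (UNIV - {0})"
        by (rule infsum_mono[OF ssum0 summable_on_cmult_right[OF clsum]]) (rule s_le)
      also have "\<dots> = C * infsum (cl \<eta> \<beta> b bt) (UNIV - {0})"
        by (rule infsum_cmult_right) (use clsum in simp)
      also have "\<dots> \<le> C * HS^2" using clb C0 by (intro mult_left_mono) auto
      finally show ?thesis .
    qed
    define S where "S = infsum s UNIV"
    have S0: "S \<ge> 0" unfolding S_def using s0 by (simp add: infsum_nonneg)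
    have mink: "(\<integral>\<^sup>+\<omega>. ennreal ((\<Sum>\<^sub>\<infinity>k. a k \<omega>) powr (p/2)) \<partial>M) \<le> ennreal (S powr (p/2))"
      unfolding S_def by (rule infsum_mink[OF p2 a0 s0 meas bnd ssum])
    define I where "I = (\<integral>\<^sup>+\<omega>. ennreal (Hr_norm \<eta> \<rho> (\<lambda>xa. Oproc t \<omega> xa - On n t \<omega> xa) powr p) \<partial>M)"
    have II: "I = (\<integral>\<^sup>+\<omega>. ennreal ((\<Sum>\<^sub>\<infinity>k. a k \<omega>) powr (p/2)) \<partial>M)"
      unfolding I_def
    proof (rule nn_integral_cong_AE)
      show "AE \<omega> in M. ennreal (Hr_norm \<eta> \<rho> (\<lambda>xa. Oproc t \<omega> xa - On n t \<omega> xa) powr p) = ennreal ((\<Sum>\<^sub>\<infinity>k. a k \<omega>) powr (p/2))"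
        using AEid
      proof eventually_elim
        case (elim \<omega>)
        have "Hr_norm \<eta> \<rho> (\<lambda>xa. Oproc t \<omega> xa - On n t \<omega> xa) = sqrt (\<Sum>\<^sub>\<infinity>k. a k \<omega>)"
          unfolding Hr_norm_def a_def using elim by simp
        moreover have y0: "0 \<le> (\<Sum>\<^sub>\<infinity>k. a k \<omega>)" using a0 by (simp add: infsum_nonneg)
        moreover have "sqrt (\<Sum>\<^sub>\<infinity>k. a k \<omega>) powr p = (\<Sum>\<^sub>\<infinity>k. a k \<omega>) powr (p/2)"
        proof -
          have "sqrt (\<Sum>\<^sub>\<infinity>k. a k \<omega>) = (\<Sum>\<^sub>\<infinity>k. a k \<omega>) powr (1/2)" using y0 by (simp add: powr_half_sqrt)
          then show ?thesis by (simp add: powr_powr)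
        qed
        ultimately show ?case by simp
      qed
    qed
    have Ile: "I \<le> ennreal (S powr (p/2))" using mink II by simp
    have Ifin: "I \<noteq> \<infinity>" using Ile by (auto simp: top_unique)
    have Ier: "enn2real I \<le> S powr (p/2)"
      by (rule enn2real_leI) (simp, rule Ile)
    have "Lp_norm M p \<eta> \<rho> (\<lambda>\<omega> x. Oproc t \<omega> x - On n t \<omega> x) = ennreal (enn2real I powr (1/p))"
      unfolding Lp_norm_def Let_def I_def[symmetric] using Ifin by simp
    also have "\<dots> \<le> ennreal ((S powr (p/2)) powr (1/p))"
      using Ier p by (intro ennreal_leI powr_mono2) auto
    also have "(S powr (p/2)) powr (1/p) = sqrt S"
      using p S0 by (simp add: powr_powr powr_half_sqrt[symmetric])
    also have "sqrt S \<le> sqrt (C * HS^2)" using sinf unfolding S_def by simp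
    finally show "Lp_norm M p \<eta> \<rho> (\<lambda>\<omega> x. Oproc t \<omega> x - On n t \<omega> x)
        \<le> ennreal (sqrt (p * (p - 1) * T powr (\<beta> - 2*\<rho> - 2*\<epsilon>) / (2 * (\<beta> - 2*\<rho> - 2*\<epsilon>)))
                      * HS_norm_B \<eta> ((\<beta> - 1)/2) b bt * real n powr (- 4*\<epsilon>))"
      unfolding RHS_eq by (simp add: ennreal_leI)
  qed
qed

end
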